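(* For all $n\ge1$, $a_{\{0101,0120\}}(n)=a_{\{101,120\}}(n)=|S_n(231,4123)|$. Moreover, with the convention $a_{\{0101,0120\}}(0)=1$, $$\sum_{n\ge0}a_{\{0101,0120\}}(n)\,x^n=\frac{(1-x)^3}{1-4x+5x^2-3x^3}.$$
   Context: An ascent in an integer sequence $s_1\cdots s_m$ is an index $j$ with $s_j<s_{j+1}$; $\mathrm{asc}$ denotes the number of ascents. An ascent sequence is a sequence $x_1\cdots x_n$ of nonnegative integers with $x_1=0$ and $x_i\le 1+\mathrm{asc}(x_1\cdots x_{i-1})$ for all $i\ge2$. The reduction $\mathrm{red}(w)$ of an integer sequence $w$ replaces the $i$-th smallest distinct letter of $w$ by $i-1$; a pattern is a reduced sequence. A sequence $x$ contains a pattern $p=p_1\cdots p_k$ if there are indices $i_1<\cdots<i_k$ with $\mathrm{red}(x_{i_1}\cdots x_{i_k})=p$; otherwise $x$ avoids $p$. For a finite set $P$ of patterns, $a_P(n)$ denotes the number of ascent sequences of length $n$ avoiding every pattern in $P$. $S_n(231,4123)$ is the set of permutations of $\{1,\dots,n\}$ avoiding (in the classical sense) both the permutation patterns $231$ and $4123$. *)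

theory Defs
  imports "HOL-Library.Sublist" "HOL-Computational_Algebra.Formal_Power_Series"
begin

definition asc :: "nat list \<Rightarrow> nat" where
  "asc s = card {j. Suc j < length s \<and> s ! j < s ! Suc j}"

definition ascent_seq :: "nat list \<Rightarrow> bool" where
  "ascent_seq x \<longleftrightarrow> x \<noteq> [] \<and> x ! 0 = 0 \<and>
     (\<forall>i. 1 \<le> i \<and> i < length x \<longrightarrow> x ! i \<le> 1 + asc (take i x))"

definition red :: "nat list \<Rightarrow> nat list" where
  "red w = map (\<lambda>a. card {b \<in> set w. b < a}) w"

definition contains :: "nat list \<Rightarrow> nat list \<Rightarrow> bool" where
  "contains x p \<longleftrightarrow> (\<exists>ys. subseq ys x \<and> red ys = p)"

definition avoids_all :: "nat list \<Rightarrow> nat list set \<Rightarrow> bool" where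
  "avoids_all x P \<longleftrightarrow> (\<forall>p\<in>P. \<not> contains x p)"

definition a_P :: "nat list set \<Rightarrow> nat \<Rightarrow> nat" where
  "a_P P n = card {x. length x = n \<and> ascent_seq x \<and> avoids_all x P}"

text \<open>Permutations of {1..n} in one-line notation, and classical pattern containment
  (order-isomorphic subsequence); the permutation pattern q (on 1..k) is compared
  after shifting to 0..k-1, which is what red produces on distinct letters.\<close>
definition is_perm :: "nat \<Rightarrow> nat list \<Rightarrow> bool" where
  "is_perm n s \<longleftrightarrow> length s = n \<and> distinct s \<and> set s = {1..n}"

definition perm_contains :: "nat list \<Rightarrow> nat list \<Rightarrow> bool" where
  "perm_contains s q \<longleftrightarrow> (\<exists>ys. subseq ys s \<and> red ys = map (\<lambda>i. i - 1) q)"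

definition S_231_4123 :: "nat \<Rightarrow> nat list set" where
  "S_231_4123 n = {s. is_perm n s \<and> \<not> perm_contains s [2,3,1] \<and> \<not> perm_contains s [4,1,2,3]}"

end

theory Submission
  imports Defs
begin


lemma length_red[simp]: "length (red w) = length w"
  by (simp add: red_def)

lemma red_nth: "i < length w \<Longrightarrow> red w ! i = card {b \<in> set w. b < w ! i}"
  by (simp add: red_def)

lemma red_nth_less:
  assumes "i < length w" "j < length w" "w ! i < w ! j"
  shows "red w ! i < red w ! j"
proof -
  have "{b \<in> set w. b < w ! i} \<subseteq> {b \<in> set w. b < w ! j}"
    using assms(3) by auto
  moreover have "w ! i \<in> {b \<in> set w. b < w ! j}" "w ! i \<notin> {b \<in> set w. b < w ! i}"
    using assms by auto
  ultimately have "{b \<in> set w. b < w ! i} \<subset> {b \<in> set w. b < w ! j}" by blast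
  then have "card {b \<in> set w. b < w ! i} < card {b \<in> set w. b < w ! j}"
    by (rule psubset_card_mono[rotated]) simp
  then show ?thesis using assms by (simp add: red_nth)
qed

lemma red_nth_le:
  assumes "i < length w" "j < length w" "w ! i \<le> w ! j"
  shows "red w ! i \<le> red w ! j"
proof -
  have "{b \<in> set w. b < w ! i} \<subseteq> {b \<in> set w. b < w ! j}"
    using assms(3) by auto
  then have "card {b \<in> set w. b < w ! i} \<le> card {b \<in> set w. b < w ! j}"
    by (rule card_mono[rotated]) simp
  then show ?thesis using assms by (simp add: red_nth)
qed

lemma red_nth_less_iff:
  assumes "i < length w" "j < length w"
  shows "red w ! i < red w ! j \<longleftrightarrow> w ! i < w ! j"
proof
  assume h: "red w ! i < red w ! j"
  show "w ! i < w ! j"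
  proof (rule ccontr)
    assume "\<not> w ! i < w ! j"
    then have "w ! j \<le> w ! i" by simp
    then have "red w ! j \<le> red w ! i" by (rule red_nth_le[OF assms(2,1)])
    with h show False by simp
  qed
next
  assume "w ! i < w ! j"
  then show "red w ! i < red w ! j" by (rule red_nth_less[OF assms])
qed

lemma red_nth_bound:
  assumes "i < length w"
  shows "red w ! i < card (set w)"
proof -
  have "w ! i \<in> set w" using assms by (rule nth_mem)
  then have "{b \<in> set w. b < w ! i} \<subset> set w"
    by blast
  then have "card {b \<in> set w. b < w ! i} < card (set w)"
    by (rule psubset_card_mono[rotated]) simp
  then show ?thesis using assms by (simp add: red_nth)
qed

lemma subseq_Cons_idx:
  "subseq (a#ys) xs \<longleftrightarrow> (\<exists>i<length xs. xs!i = a \<and> subseq ys (drop (Suc i) xs))"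
proof (induction xs)
  case Nil then show ?case by simp
next
  case (Cons b xs)
  show ?case
  proof
    assume h: "subseq (a#ys) (b#xs)"
    show "\<exists>i<length (b#xs). (b#xs)!i = a \<and> subseq ys (drop (Suc i) (b#xs))"
    proof (cases "a = b")
      case True
      then have "subseq ys xs" using h by simp
      then show ?thesis using True by (intro exI[of _ 0]) simp
    next
      case False
      then have "subseq (a#ys) xs" using h by simp
      then obtain i where "i<length xs" "xs!i = a" "subseq ys (drop (Suc i) xs)" using Cons.IH by blast
      then show ?thesis by (intro exI[of _ "Suc i"]) simp
    qed
  next
    assume "\<exists>i<length (b#xs). (b#xs)!i = a \<and> subseq ys (drop (Suc i) (b#xs))"
    then obtain i where i: "i<length (b#xs)" "(b#xs)!i = a" "subseq ys (drop (Suc i) (b#xs))" by blast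
    show "subseq (a#ys) (b#xs)"
    proof (cases i)
      case 0 then show ?thesis using i by simp
    next
      case (Suc i')
      then have "subseq (a#ys) xs" using i Cons.IH by auto
      then show ?thesis by (rule list_emb_Cons)
    qed
  qed
qed

lemma subseq_Cons_idx':
  "subseq (a#ys) (drop m xs) \<longleftrightarrow> (\<exists>i. m \<le> i \<and> i<length xs \<and> xs!i = a \<and> subseq ys (drop (Suc i) xs))"
proof -
  have "subseq (a#ys) (drop m xs) \<longleftrightarrow> (\<exists>i'<length xs - m. xs!(m+i') = a \<and> subseq ys (drop (Suc (m+i')) xs))"
    unfolding subseq_Cons_idx by (cases "m \<le> length xs") (auto simp: add.commute)
  also have "\<dots> \<longleftrightarrow> (\<exists>i. m \<le> i \<and> i<length xs \<and> xs!i = a \<and> subseq ys (drop (Suc i) xs))"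
  proof
    assume "\<exists>i'<length xs - m. xs!(m+i') = a \<and> subseq ys (drop (Suc (m+i')) xs)"
    then obtain i' where "i'<length xs - m" "xs!(m+i') = a" "subseq ys (drop (Suc (m+i')) xs)" by blast
    then show "\<exists>i. m \<le> i \<and> i<length xs \<and> xs!i = a \<and> subseq ys (drop (Suc i) xs)"
      by (intro exI[of _ "m+i'"]) auto
  next
    assume "\<exists>i. m \<le> i \<and> i<length xs \<and> xs!i = a \<and> subseq ys (drop (Suc i) xs)"
    then obtain i where "m \<le> i" "i<length xs" "xs!i = a" "subseq ys (drop (Suc i) xs)" by blast
    then show "\<exists>i'<length xs - m. xs!(m+i') = a \<and> subseq ys (drop (Suc (m+i')) xs)"
      by (intro exI[of _ "i-m"]) auto
  qed
  finally show ?thesis .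
qed


lemma subd1: "subseq [c] (drop m xs) \<longleftrightarrow> (\<exists>k. m \<le> k \<and> k<length xs \<and> xs!k = c)"
  by (simp only: subseq_Cons_idx' list_emb_Nil simp_thms)

lemma subd2: "subseq [b,c] (drop m xs) \<longleftrightarrow> (\<exists>j k. m \<le> j \<and> j < k \<and> k<length xs \<and> xs!j = b \<and> xs!k = c)"
proof -
  have "subseq [b,c] (drop m xs) \<longleftrightarrow> (\<exists>j\<ge>m. j<length xs \<and> xs!j = b \<and> (\<exists>k\<ge>Suc j. k<length xs \<and> xs!k = c))"
    by (simp only: subseq_Cons_idx' list_emb_Nil simp_thms)
  also have "\<dots> \<longleftrightarrow> (\<exists>j k. m \<le> j \<and> j < k \<and> k<length xs \<and> xs!j = b \<and> xs!k = c)"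
    by (simp only: Suc_le_eq) (blast intro: less_trans)
  finally show ?thesis .
qed

lemma subd3: "subseq [a,b,c] (drop m xs) \<longleftrightarrow> (\<exists>i j k. m \<le> i \<and> i<j \<and> j < k \<and> k<length xs \<and> xs!i = a \<and> xs!j = b \<and> xs!k = c)"
proof -
  have "subseq [a,b,c] (drop m xs) \<longleftrightarrow> (\<exists>i\<ge>m. i<length xs \<and> xs!i = a \<and> (\<exists>j\<ge>Suc i. j<length xs \<and> xs!j = b \<and> (\<exists>k\<ge>Suc j. k<length xs \<and> xs!k = c)))"
    by (simp only: subseq_Cons_idx' list_emb_Nil simp_thms)
  also have "\<dots> \<longleftrightarrow> (\<exists>i j k. m \<le> i \<and> i<j \<and> j < k \<and> k<length xs \<and> xs!i = a \<and> xs!j = b \<and> xs!k = c)"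
    by (simp only: Suc_le_eq) (blast intro: less_trans)
  finally show ?thesis .
qed

lemma subd4: "subseq [a,b,c,d] (drop m xs) \<longleftrightarrow> (\<exists>i j k l. m \<le> i \<and> i<j \<and> j < k \<and> k < l \<and> l<length xs \<and> xs!i = a \<and> xs!j = b \<and> xs!k = c \<and> xs!l = d)"
proof -
  have "subseq [a,b,c,d] (drop m xs) \<longleftrightarrow> (\<exists>i\<ge>m. i<length xs \<and> xs!i = a \<and> (\<exists>j\<ge>Suc i. j<length xs \<and> xs!j = b \<and> (\<exists>k\<ge>Suc j. k<length xs \<and> xs!k = c \<and> (\<exists>l\<ge>Suc k. l<length xs \<and> xs!l = d))))"
    by (simp only: subseq_Cons_idx' list_emb_Nil simp_thms)
  also have "\<dots> \<longleftrightarrow> (\<exists>i j k l. m \<le> i \<and> i<j \<and> j < k \<and> k < l \<and> l<length xs \<and> xs!i = a \<and> xs!j = b \<and> xs!k = c \<and> xs!l = d)"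
    by (simp only: Suc_le_eq) (blast intro: less_trans)
  finally show ?thesis .
qed

lemma sub3: "subseq [a,b,c] xs \<longleftrightarrow> (\<exists>i j k. i<j \<and> j<k \<and> k<length xs \<and> xs!i=a \<and> xs!j=b \<and> xs!k=c)"
  using subd3[of a b c 0 xs] by simp

lemma sub4: "subseq [a,b,c,d] xs \<longleftrightarrow> (\<exists>i j k l. i<j \<and> j<k \<and> k<l \<and> l<length xs \<and> xs!i=a \<and> xs!j=b \<and> xs!k=c \<and> xs!l=d)"
  using subd4[of a b c d 0 xs] by simp
lemma list3: "length r = 3 \<Longrightarrow> r = [r!0, r!1, r!2]"
  by (cases r; cases "tl r"; cases "tl (tl r)") (auto simp: numeral_3_eq_3)

lemma list4: "length r = 4 \<Longrightarrow> r = [r!0, r!1, r!2, r!3]"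
  by (cases r; cases "tl r"; cases "tl (tl r)"; cases "tl (tl (tl r))") (auto simp: eval_nat_numeral)

lemma contains3:
  assumes "length p = 3"
  shows "contains x p \<longleftrightarrow> (\<exists>i j k. i<j \<and> j<k \<and> k<length x \<and> red [x!i,x!j,x!k] = p)"
proof
  assume "contains x p"
  then obtain ys where ys: "subseq ys x" "red ys = p" unfolding contains_def by blast
  then have "length ys = 3" using assms length_red by metis
  then have "ys = [ys!0, ys!1, ys!2]" by (rule list3)
  then have "subseq [ys!0, ys!1, ys!2] x" "red [ys!0, ys!1, ys!2] = p" using ys by simp_all
  then obtain i j k where "i<j" "j<k" "k<length x" "x!i=ys!0" "x!j=ys!1" "x!k=ys!2" unfolding sub3 by blast
  then show "\<exists>i j k. i<j \<and> j<k \<and> k<length x \<and> red [x!i,x!j,x!k] = p"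
    using \<open>red [ys!0, ys!1, ys!2] = p\<close> by metis
next
  assume "\<exists>i j k. i<j \<and> j<k \<and> k<length x \<and> red [x!i,x!j,x!k] = p"
  then obtain i j k where "i<j" "j<k" "k<length x" "red [x!i,x!j,x!k] = p" by blast
  then have "subseq [x!i,x!j,x!k] x" unfolding sub3 by blast
  then show "contains x p" unfolding contains_def using \<open>red [x!i,x!j,x!k] = p\<close> by blast
qed

lemma contains4:
  assumes "length p = 4"
  shows "contains x p \<longleftrightarrow> (\<exists>i j k l. i<j \<and> j<k \<and> k<l \<and> l<length x \<and> red [x!i,x!j,x!k,x!l] = p)"
proof
  assume "contains x p"
  then obtain ys where ys: "subseq ys x" "red ys = p" unfolding contains_def by blast
  then have "length ys = 4" using assms length_red by metis
  then have "ys = [ys!0, ys!1, ys!2, ys!3]" by (rule list4)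
  then have "subseq [ys!0, ys!1, ys!2, ys!3] x" "red [ys!0, ys!1, ys!2, ys!3] = p" using ys by simp_all
  then obtain i j k l where "i<j" "j<k" "k<l" "l<length x" "x!i=ys!0" "x!j=ys!1" "x!k=ys!2" "x!l=ys!3" unfolding sub4 by blast
  then show "\<exists>i j k l. i<j \<and> j<k \<and> k<l \<and> l<length x \<and> red [x!i,x!j,x!k,x!l] = p"
    using \<open>red [ys!0, ys!1, ys!2, ys!3] = p\<close> by metis
next
  assume "\<exists>i j k l. i<j \<and> j<k \<and> k<l \<and> l<length x \<and> red [x!i,x!j,x!k,x!l] = p"
  then obtain i j k l where "i<j" "j<k" "k<l" "l<length x" "red [x!i,x!j,x!k,x!l] = p" by blast
  then have "subseq [x!i,x!j,x!k,x!l] x" unfolding sub4 by blast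
  then show "contains x p" unfolding contains_def using \<open>red [x!i,x!j,x!k,x!l] = p\<close> by blast
qed

lemma red_cmp: "red w = p \<Longrightarrow> i < length w \<Longrightarrow> j < length w \<Longrightarrow> (p!i < p!j \<longleftrightarrow> w!i < w!j)"
  using red_nth_less_iff by blast

lemma R101: "red [a,b,c] = [1,0,1] \<longleftrightarrow> b<a \<and> c=a"
proof
  assume h: "red [a,b,c] = [1,0,1]"
  have "b < a" using red_cmp[OF h, of 1 0] by simp
  moreover have "\<not> a < c" using red_cmp[OF h, of 0 2] by simp
  moreover have "\<not> c < a" using red_cmp[OF h, of 2 0] by simp
  ultimately show "b<a \<and> c=a" by simp
next
  assume h: "b<a \<and> c=a"
  let ?r = "red [a,b,c]"
  have "set [a,b,c] = {a,b}" using h by auto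
  then have c: "card (set [a,b,c]) = 2" using h by simp
  have "?r!1 < ?r!0" using red_nth_less_iff[of 1 "[a,b,c]" 0] h by simp
  moreover have "?r!0 < 2" using red_nth_bound[of 0 "[a,b,c]"] c by simp
  moreover have "\<not> ?r!0 < ?r!2" "\<not> ?r!2 < ?r!0" using red_nth_less_iff[of 0 "[a,b,c]" 2] red_nth_less_iff[of 2 "[a,b,c]" 0] h by simp_all
  ultimately have "?r!0 = 1" "?r!1 = 0" "?r!2 = 1" by linarith+
  then show "?r = [1,0,1]" using list3[of ?r] by simp
qed

lemma R120: "red [a,b,c] = [1,2,0] \<longleftrightarrow> c<a \<and> a<b"
proof
  assume h: "red [a,b,c] = [1,2,0]"
  have "c < a" using red_cmp[OF h, of 2 0] by simp
  moreover have "a < b" using red_cmp[OF h, of 0 1] by simp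
  ultimately show "c<a \<and> a<b" by simp
next
  assume h: "c<a \<and> a<b"
  let ?r = "red [a,b,c]"
  have c: "card (set [a,b,c]) = 3" using h by simp
  have "?r!2 < ?r!0" "?r!0 < ?r!1" using red_nth_less_iff[of 2 "[a,b,c]" 0] red_nth_less_iff[of 0 "[a,b,c]" 1] h by simp_all
  moreover have "?r!1 < 3" using red_nth_bound[of 1 "[a,b,c]"] c by simp
  ultimately have "?r!0 = 1" "?r!1 = 2" "?r!2 = 0" by linarith+
  then show "?r = [1,2,0]" using list3[of ?r] by simp
qed

lemma R0101: "red [a,b,c,d] = [0,1,0,1] \<longleftrightarrow> a<b \<and> c=a \<and> d=b"
proof
  assume h: "red [a,b,c,d] = [0,1,0,1]"
  have "a < b" using red_cmp[OF h, of 0 1] by simp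
  moreover have "\<not> a < c" "\<not> c < a" using red_cmp[OF h, of 0 2] red_cmp[OF h, of 2 0] by simp_all
  moreover have "\<not> b < d" "\<not> d < b" using red_cmp[OF h, of 1 3] red_cmp[OF h, of 3 1] by simp_all
  ultimately show "a<b \<and> c=a \<and> d=b" by simp
next
  assume h: "a<b \<and> c=a \<and> d=b"
  let ?w = "[a,b,c,d]"
  let ?r = "red ?w"
  have "set ?w = {a,b}" using h by auto
  then have c: "card (set ?w) = 2" using h by simp
  have "?r!0 < ?r!1" using red_nth_less_iff[of 0 ?w 1] h by simp
  moreover have "?r!1 < 2" using red_nth_bound[of 1 ?w] c by simp
  moreover have "\<not> ?r!0 < ?r!2" "\<not> ?r!2 < ?r!0" using red_nth_less_iff[of 0 ?w 2] red_nth_less_iff[of 2 ?w 0] h by simp_all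
  moreover have "\<not> ?r!1 < ?r!3" "\<not> ?r!3 < ?r!1" using red_nth_less_iff[of 1 ?w 3] red_nth_less_iff[of 3 ?w 1] h by simp_all
  ultimately have "?r!0 = 0" "?r!1 = 1" "?r!2 = 0" "?r!3 = 1" by linarith+
  then show "?r = [0,1,0,1]" using list4[of ?r] by simp
qed

lemma R0120: "red [a,b,c,d] = [0,1,2,0] \<longleftrightarrow> a<b \<and> b<c \<and> d=a"
proof
  assume h: "red [a,b,c,d] = [0,1,2,0]"
  have "a < b" "b < c" using red_cmp[OF h, of 0 1] red_cmp[OF h, of 1 2] by simp_all
  moreover have "\<not> a < d" "\<not> d < a" using red_cmp[OF h, of 0 3] red_cmp[OF h, of 3 0] by simp_all
  ultimately show "a<b \<and> b<c \<and> d=a" by simp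
next
  assume h: "a<b \<and> b<c \<and> d=a"
  let ?w = "[a,b,c,d]"
  let ?r = "red ?w"
  have "set ?w = {a,b,c}" using h by auto
  then have c: "card (set ?w) = 3" using h by simp
  have "?r!0 < ?r!1" "?r!1 < ?r!2" using red_nth_less_iff[of 0 ?w 1] red_nth_less_iff[of 1 ?w 2] h by simp_all
  moreover have "?r!2 < 3" using red_nth_bound[of 2 ?w] c by simp
  moreover have "\<not> ?r!0 < ?r!3" "\<not> ?r!3 < ?r!0" using red_nth_less_iff[of 0 ?w 3] red_nth_less_iff[of 3 ?w 0] h by simp_all
  ultimately have "?r!0 = 0" "?r!1 = 1" "?r!2 = 2" "?r!3 = 0" by linarith+
  then show "?r = [0,1,2,0]" using list4[of ?r] by simp
qed

lemma R3012: "red [a,b,c,d] = [3,0,1,2] \<longleftrightarrow> b<c \<and> c<d \<and> d<a"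
proof
  assume h: "red [a,b,c,d] = [3,0,1,2]"
  have "b < c" "c < d" "d < a" using red_cmp[OF h, of 1 2] red_cmp[OF h, of 2 3] red_cmp[OF h, of 3 0] by simp_all
  then show "b<c \<and> c<d \<and> d<a" by simp
next
  assume h: "b<c \<and> c<d \<and> d<a"
  let ?w = "[a,b,c,d]"
  let ?r = "red ?w"
  have c: "card (set ?w) = 4" using h by auto
  have "?r!1 < ?r!2" "?r!2 < ?r!3" "?r!3 < ?r!0" using red_nth_less_iff[of 1 ?w 2] red_nth_less_iff[of 2 ?w 3] red_nth_less_iff[of 3 ?w 0] h by simp_all
  moreover have "?r!0 < 4" using red_nth_bound[of 0 ?w] c by simp
  ultimately have "?r!0 = 3" "?r!1 = 0" "?r!2 = 1" "?r!3 = 2" by linarith+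
  then show "?r = [3,0,1,2]" using list4[of ?r] by simp
qed

definition c101 :: "nat list \<Rightarrow> bool" where
  "c101 x \<longleftrightarrow> (\<exists>i j k. i<j \<and> j<k \<and> k<length x \<and> x!j < x!i \<and> x!k = x!i)"
definition c120 :: "nat list \<Rightarrow> bool" where
  "c120 x \<longleftrightarrow> (\<exists>i j k. i<j \<and> j<k \<and> k<length x \<and> x!k < x!i \<and> x!i < x!j)"
definition c0101 :: "nat list \<Rightarrow> bool" where
  "c0101 x \<longleftrightarrow> (\<exists>i j k l. i<j \<and> j<k \<and> k<l \<and> l<length x \<and> x!i < x!j \<and> x!k = x!i \<and> x!l = x!j)"
definition c0120 :: "nat list \<Rightarrow> bool" where
  "c0120 x \<longleftrightarrow> (\<exists>i j k l. i<j \<and> j<k \<and> k<l \<and> l<length x \<and> x!i < x!j \<and> x!j < x!k \<and> x!l = x!i)"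
definition c3012 :: "nat list \<Rightarrow> bool" where
  "c3012 x \<longleftrightarrow> (\<exists>i j k l. i<j \<and> j<k \<and> k<l \<and> l<length x \<and> x!j < x!k \<and> x!k < x!l \<and> x!l < x!i)"

lemma contains_101: "contains x [1,0,1] \<longleftrightarrow> c101 x"
proof -
  have l: "length [1,0,1::nat] = 3" by simp
  show ?thesis unfolding contains3[OF l] R101 c101_def by (rule refl)
qed
lemma contains_120: "contains x [1,2,0] \<longleftrightarrow> c120 x"
proof -
  have l: "length [1,2,0::nat] = 3" by simp
  show ?thesis unfolding contains3[OF l] R120 c120_def by (rule refl)
qed
lemma contains_0101: "contains x [0,1,0,1] \<longleftrightarrow> c0101 x"
proof -
  have l: "length [0,1,0,1::nat] = 4" by simp
  show ?thesis unfolding contains4[OF l] R0101 c0101_def by (rule refl)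
qed
lemma contains_0120: "contains x [0,1,2,0] \<longleftrightarrow> c0120 x"
proof -
  have l: "length [0,1,2,0::nat] = 4" by simp
  show ?thesis unfolding contains4[OF l] R0120 c0120_def by (rule refl)
qed
lemma contains_3012: "contains x [3,0,1,2] \<longleftrightarrow> c3012 x"
proof -
  have l: "length [3,0,1,2::nat] = 4" by simp
  show ?thesis unfolding contains4[OF l] R3012 c3012_def by (rule refl)
qed


lemma contains_mono: "contains x p \<Longrightarrow> subseq x y \<Longrightarrow> contains y p"
  unfolding contains_def using subseq_order.trans by blast

lemma subseq_snoc2: "subseq (x@[v]) (x@[w,v])"
proof -
  have "subseq [v] [w,v]" by simp
  then show ?thesis using subseq_append' by (metis append_Cons append_Nil)
qed

lemma asc_snoc:
  assumes "x \<noteq> []"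
  shows "asc (x@[v]) = asc x + (if last x < v then 1 else 0)"
proof -
  define S where "S = {j. Suc j < length x \<and> x!j < x!Suc j}"
  have last: "last x = x ! (length x - 1)" using assms by (simp add: last_conv_nth)
  have eq: "{j. Suc j < length (x@[v]) \<and> (x@[v])!j < (x@[v])!Suc j} = S \<union> {j. j = length x - 1 \<and> last x < v}"
  proof (rule set_eqI)
    fix j
    show "j \<in> {j. Suc j < length (x@[v]) \<and> (x@[v])!j < (x@[v])!Suc j} \<longleftrightarrow> j \<in> S \<union> {j. j = length x - 1 \<and> last x < v}"
    proof (cases "Suc j < length x")
      case True
      then show ?thesis unfolding S_def by (auto simp: nth_append)
    next
      case False
      then show ?thesis unfolding S_def using last assms by (cases "j = length x - 1") (auto simp: nth_append)
    qed
  qed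
  have fin: "finite S" unfolding S_def by (rule finite_subset[of _ "{..<length x}"]) auto
  have notin: "length x - 1 \<notin> S" unfolding S_def by auto
  show ?thesis
  proof (cases "last x < v")
    case True
    then have "{j. j = length x - 1 \<and> last x < v} = {length x - 1}" by auto
    then show ?thesis using eq fin notin True unfolding asc_def S_def[symmetric] by simp
  next
    case False
    then have "{j. j = length x - 1 \<and> last x < v} = {}" by auto
    then show ?thesis using eq False unfolding asc_def S_def[symmetric] by simp
  qed
qed

lemma asc_le: "asc x \<le> length x"
proof -
  have "{j. Suc j < length x \<and> x!j < x!Suc j} \<subseteq> {..<length x}" by auto
  then have "card {j. Suc j < length x \<and> x!j < x!Suc j} \<le> card {..<length x}"
    by (rule card_mono[rotated]) simp
  then show ?thesis unfolding asc_def by simp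
qed

lemma ascent_seq_snoc:
  assumes "x \<noteq> []"
  shows "ascent_seq (x@[v]) \<longleftrightarrow> ascent_seq x \<and> v \<le> 1 + asc x"
proof
  assume h: "ascent_seq (x@[v])"
  have "x ! 0 = 0" using h assms unfolding ascent_seq_def by (simp add: nth_append)
  moreover have "\<forall>i. 1 \<le> i \<and> i < length x \<longrightarrow> x ! i \<le> 1 + asc (take i x)"
  proof (intro allI impI)
    fix i assume i: "1 \<le> i \<and> i < length x"
    then have "(x@[v]) ! i \<le> 1 + asc (take i (x@[v]))" using h unfolding ascent_seq_def by simp
    then show "x ! i \<le> 1 + asc (take i x)" using i by (simp add: nth_append)
  qed
  moreover have "v \<le> 1 + asc x"
  proof -
    have "1 \<le> length x" using assms by (cases x) auto
    have all: "\<forall>i. 1 \<le> i \<and> i < length (x@[v]) \<longrightarrow> (x@[v]) ! i \<le> 1 + asc (take i (x@[v]))"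
      using h unfolding ascent_seq_def by blast
    have "(x@[v]) ! length x \<le> 1 + asc (take (length x) (x@[v]))"
      using all[rule_format, of "length x"] \<open>1 \<le> length x\<close> by simp
    then show ?thesis by simp
  qed
  ultimately show "ascent_seq x \<and> v \<le> 1 + asc x" using assms unfolding ascent_seq_def by simp
next
  assume h: "ascent_seq x \<and> v \<le> 1 + asc x"
  have "\<forall>i. 1 \<le> i \<and> i < length (x@[v]) \<longrightarrow> (x@[v]) ! i \<le> 1 + asc (take i (x@[v]))"
  proof (intro allI impI)
    fix i assume i: "1 \<le> i \<and> i < length (x@[v])"
    show "(x@[v]) ! i \<le> 1 + asc (take i (x@[v]))"
    proof (cases "i < length x")
      case True
      then show ?thesis using h i unfolding ascent_seq_def by (simp add: nth_append)
    next
      case False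
      then have "i = length x" using i by simp
      then show ?thesis using h by simp
    qed
  qed
  moreover have "(x@[v]) ! 0 = 0" using h assms unfolding ascent_seq_def by (simp add: nth_append)
  ultimately show "ascent_seq (x@[v])" unfolding ascent_seq_def by simp
qed

lemma ascent_seq_single: "ascent_seq [v] \<longleftrightarrow> v = 0"
  unfolding ascent_seq_def by simp

lemma ascent_seq_bound:
  assumes "ascent_seq x" "a \<in> set x"
  shows "a \<le> length x"
proof -
  obtain i where i: "i < length x" "x ! i = a" using assms(2) by (auto simp: in_set_conv_nth)
  show ?thesis
  proof (cases "i = 0")
    case True then show ?thesis using i assms(1) unfolding ascent_seq_def by simp
  next
    case False
    have all: "\<forall>i. 1 \<le> i \<and> i < length x \<longrightarrow> x ! i \<le> 1 + asc (take i x)"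
      using assms(1) unfolding ascent_seq_def by blast
    have "x ! i \<le> 1 + asc (take i x)" using all[rule_format, of i] i False by simp
    moreover have "asc (take i x) \<le> i" using asc_le[of "take i x"] i by simp
    ultimately show ?thesis using i by simp
  qed
qed

definition mx :: "nat list \<Rightarrow> nat" where "mx x = Max (set x)"

lemma mx_ge: "a \<in> set x \<Longrightarrow> a \<le> mx x"
  unfolding mx_def by simp

lemma nth_le_mx: "i < length x \<Longrightarrow> x ! i \<le> mx x"
  by (rule mx_ge) simp

lemma mx_in: "x \<noteq> [] \<Longrightarrow> mx x \<in> set x"
  unfolding mx_def by simp

lemma mx_snoc: "x \<noteq> [] \<Longrightarrow> mx (x@[v]) = max (mx x) v"
  unfolding mx_def by (simp add: max.commute)

lemma mx_single: "mx [v] = v"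
  unfolding mx_def by simp

definition nfs :: "nat list \<Rightarrow> nat \<Rightarrow> bool" where
  "nfs x w \<longleftrightarrow> (\<forall>i j. i<j \<and> j<length x \<and> x!i = w \<longrightarrow> w \<le> x!j)"

lemma nfs_snoc: "nfs (x@[v]) w \<longleftrightarrow> nfs x w \<and> (w \<in> set x \<longrightarrow> w \<le> v)"
proof
  assume h: "nfs (x@[v]) w"
  have "nfs x w" unfolding nfs_def
  proof (intro allI impI)
    fix i j assume "i<j \<and> j<length x \<and> x!i = w"
    then show "w \<le> x!j" using h[unfolded nfs_def, rule_format, of i j] by (simp add: nth_append)
  qed
  moreover have "w \<in> set x \<longrightarrow> w \<le> v"
  proof
    assume "w \<in> set x"
    then obtain i where "i < length x" "x!i = w" by (auto simp: in_set_conv_nth)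
    then show "w \<le> v" using h[unfolded nfs_def, rule_format, of i "length x"] by (simp add: nth_append)
  qed
  ultimately show "nfs x w \<and> (w \<in> set x \<longrightarrow> w \<le> v)" by simp
next
  assume h: "nfs x w \<and> (w \<in> set x \<longrightarrow> w \<le> v)"
  show "nfs (x@[v]) w" unfolding nfs_def
  proof (intro allI impI)
    fix i j assume ij: "i<j \<and> j<length (x@[v]) \<and> (x@[v])!i = w"
    then have i: "i < length x" "x!i = w" by (auto simp: nth_append)
    show "w \<le> (x@[v])!j"
    proof (cases "j < length x")
      case True
      then show ?thesis using h ij i unfolding nfs_def by (simp add: nth_append)
    next
      case False
      then have "j = length x" using ij by simp
      moreover have "w \<in> set x" using i by (metis nth_mem)
      ultimately show ?thesis using h by simp
    qed
  qed
qed

lemma ex3_snoc: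
  "(\<exists>i j k. i<j \<and> j<k \<and> k<length (x@[v]) \<and> P ((x@[v])!i) ((x@[v])!j) ((x@[v])!k)) \<longleftrightarrow>
   (\<exists>i j k. i<j \<and> j<k \<and> k<length x \<and> P (x!i) (x!j) (x!k)) \<or> (\<exists>i j. i<j \<and> j<length x \<and> P (x!i) (x!j) v)"
proof
  assume "\<exists>i j k. i<j \<and> j<k \<and> k<length (x@[v]) \<and> P ((x@[v])!i) ((x@[v])!j) ((x@[v])!k)"
  then obtain i j k where h: "i<j" "j<k" "k<length (x@[v])" "P ((x@[v])!i) ((x@[v])!j) ((x@[v])!k)" by blast
  show "(\<exists>i j k. i<j \<and> j<k \<and> k<length x \<and> P (x!i) (x!j) (x!k)) \<or> (\<exists>i j. i<j \<and> j<length x \<and> P (x!i) (x!j) v)"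
  proof (cases "k < length x")
    case True
    then have "P (x!i) (x!j) (x!k)" using h by (simp add: nth_append)
    then show ?thesis using h True by blast
  next
    case False
    then have "k = length x" using h by simp
    then have "P (x!i) (x!j) v" "j < length x" using h by (simp_all add: nth_append)
    then show ?thesis using h by blast
  qed
next
  assume "(\<exists>i j k. i<j \<and> j<k \<and> k<length x \<and> P (x!i) (x!j) (x!k)) \<or> (\<exists>i j. i<j \<and> j<length x \<and> P (x!i) (x!j) v)"
  then show "\<exists>i j k. i<j \<and> j<k \<and> k<length (x@[v]) \<and> P ((x@[v])!i) ((x@[v])!j) ((x@[v])!k)"
  proof
    assume "\<exists>i j k. i<j \<and> j<k \<and> k<length x \<and> P (x!i) (x!j) (x!k)"
    then obtain i j k where h: "i<j" "j<k" "k<length x" "P (x!i) (x!j) (x!k)" by blast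
    then have "P ((x@[v])!i) ((x@[v])!j) ((x@[v])!k)" by (simp add: nth_append)
    then show ?thesis using h by (intro exI[of _ i] exI[of _ j] exI[of _ k]) simp
  next
    assume "\<exists>i j. i<j \<and> j<length x \<and> P (x!i) (x!j) v"
    then obtain i j where h: "i<j" "j<length x" "P (x!i) (x!j) v" by blast
    then have "P ((x@[v])!i) ((x@[v])!j) ((x@[v])!length x)" by (simp add: nth_append)
    then show ?thesis using h by (intro exI[of _ i] exI[of _ j] exI[of _ "length x"]) simp
  qed
qed

lemma ex4_snoc:
  "(\<exists>i j k l. i<j \<and> j<k \<and> k<l \<and> l<length (x@[v]) \<and> P ((x@[v])!i) ((x@[v])!j) ((x@[v])!k) ((x@[v])!l)) \<longleftrightarrow>
   (\<exists>i j k l. i<j \<and> j<k \<and> k<l \<and> l<length x \<and> P (x!i) (x!j) (x!k) (x!l)) \<or> (\<exists>i j k. i<j \<and> j<k \<and> k<length x \<and> P (x!i) (x!j) (x!k) v)"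
proof
  assume "\<exists>i j k l. i<j \<and> j<k \<and> k<l \<and> l<length (x@[v]) \<and> P ((x@[v])!i) ((x@[v])!j) ((x@[v])!k) ((x@[v])!l)"
  then obtain i j k l where h: "i<j" "j<k" "k<l" "l<length (x@[v])" "P ((x@[v])!i) ((x@[v])!j) ((x@[v])!k) ((x@[v])!l)" by blast
  show "(\<exists>i j k l. i<j \<and> j<k \<and> k<l \<and> l<length x \<and> P (x!i) (x!j) (x!k) (x!l)) \<or> (\<exists>i j k. i<j \<and> j<k \<and> k<length x \<and> P (x!i) (x!j) (x!k) v)"
  proof (cases "l < length x")
    case True
    then have "P (x!i) (x!j) (x!k) (x!l)" using h by (simp add: nth_append)
    then show ?thesis using h True by blast
  next
    case False
    then have "l = length x" using h by simp
    then have "P (x!i) (x!j) (x!k) v" "k < length x" using h by (simp_all add: nth_append)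
    then show ?thesis using h by blast
  qed
next
  assume "(\<exists>i j k l. i<j \<and> j<k \<and> k<l \<and> l<length x \<and> P (x!i) (x!j) (x!k) (x!l)) \<or> (\<exists>i j k. i<j \<and> j<k \<and> k<length x \<and> P (x!i) (x!j) (x!k) v)"
  then show "\<exists>i j k l. i<j \<and> j<k \<and> k<l \<and> l<length (x@[v]) \<and> P ((x@[v])!i) ((x@[v])!j) ((x@[v])!k) ((x@[v])!l)"
  proof
    assume "\<exists>i j k l. i<j \<and> j<k \<and> k<l \<and> l<length x \<and> P (x!i) (x!j) (x!k) (x!l)"
    then obtain i j k l where h: "i<j" "j<k" "k<l" "l<length x" "P (x!i) (x!j) (x!k) (x!l)" by blast
    then have "P ((x@[v])!i) ((x@[v])!j) ((x@[v])!k) ((x@[v])!l)" by (simp add: nth_append)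
    then show ?thesis using h by (intro exI[of _ i] exI[of _ j] exI[of _ k] exI[of _ l]) simp
  next
    assume "\<exists>i j k. i<j \<and> j<k \<and> k<length x \<and> P (x!i) (x!j) (x!k) v"
    then obtain i j k where h: "i<j" "j<k" "k<length x" "P (x!i) (x!j) (x!k) v" by blast
    then have "P ((x@[v])!i) ((x@[v])!j) ((x@[v])!k) ((x@[v])!length x)" by (simp add: nth_append)
    then show ?thesis using h by (intro exI[of _ i] exI[of _ j] exI[of _ k] exI[of _ "length x"]) simp
  qed
qed

lemma c101_snoc: "c101 (x@[v]) \<longleftrightarrow> c101 x \<or> (\<exists>i j. i<j \<and> j<length x \<and> x!j < x!i \<and> v = x!i)"
  unfolding c101_def using ex3_snoc[where P="\<lambda>a b c. b < a \<and> c = a" and x=x and v=v] by simp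
lemma c120_snoc: "c120 (x@[v]) \<longleftrightarrow> c120 x \<or> (\<exists>i j. i<j \<and> j<length x \<and> v < x!i \<and> x!i < x!j)"
  unfolding c120_def using ex3_snoc[where P="\<lambda>a b c. c < a \<and> a < b" and x=x and v=v] by simp
lemma c0101_snoc: "c0101 (x@[v]) \<longleftrightarrow> c0101 x \<or> (\<exists>i j k. i<j \<and> j<k \<and> k<length x \<and> x!i < x!j \<and> x!k = x!i \<and> v = x!j)"
  unfolding c0101_def using ex4_snoc[where P="\<lambda>a b c d. a < b \<and> c = a \<and> d = b" and x=x and v=v] by simp
lemma c0120_snoc: "c0120 (x@[v]) \<longleftrightarrow> c0120 x \<or> (\<exists>i j k. i<j \<and> j<k \<and> k<length x \<and> x!i < x!j \<and> x!j < x!k \<and> v = x!i)"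
  unfolding c0120_def using ex4_snoc[where P="\<lambda>a b c d. a < b \<and> b < c \<and> d = a" and x=x and v=v] by simp


inductive gen :: "nat list \<Rightarrow> nat \<Rightarrow> bool" where
  g0: "gen [0] 0"
| gs: "gen x s \<Longrightarrow> gen (x@[last x]) s"
| gu0: "gen x 0 \<Longrightarrow> gen (x@[Suc (mx x)]) 1"
| gu1: "gen x 1 \<Longrightarrow> gen (x@[Suc (mx x)]) 1"
| gd: "gen x 1 \<Longrightarrow> gen (x@[mx x - 1]) 2"
| gu2: "gen x 2 \<Longrightarrow> gen (x@[Suc (mx x)]) 0"

definition bad3 :: "nat list \<Rightarrow> bool" where "bad3 y \<longleftrightarrow> c101 y \<or> c120 y"
definition bad4 :: "nat list \<Rightarrow> bool" where "bad4 y \<longleftrightarrow> c0101 y \<or> c0120 y"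
definition allowed :: "nat \<Rightarrow> nat list \<Rightarrow> nat \<Rightarrow> bool" where
  "allowed s x v \<longleftrightarrow> v = last x \<or> v = Suc (mx x) \<or> (s = 1 \<and> v = mx x - 1)"

definition Inv :: "nat list \<Rightarrow> nat \<Rightarrow> bool" where
  "Inv x s \<longleftrightarrow> x \<noteq> [] \<and> ascent_seq x \<and> \<not> bad3 x \<and> \<not> bad4 x \<and> asc x = mx x \<and> s \<le> 2 \<and>
   (s = 0 \<longrightarrow> last x = mx x \<and> nfs x (mx x) \<and> (mx x = 0 \<or> \<not> nfs x (mx x - 1))) \<and>
   (s = 1 \<longrightarrow> last x = mx x \<and> 1 \<le> mx x \<and> nfs x (mx x) \<and> nfs x (mx x - 1) \<and> subseq [mx x - 1, mx x] x) \<and>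
   (s = 2 \<longrightarrow> last x = mx x - 1 \<and> 1 \<le> mx x \<and> subseq [mx x - 1, mx x] x) \<and>
   (\<forall>v. v \<le> Suc (mx x) \<longrightarrow> \<not> allowed s x v \<longrightarrow> bad3 (x@[v]) \<and> bad4 (x@[v]))"

lemma bad3_contains: "bad3 y \<longleftrightarrow> contains y [1,0,1] \<or> contains y [1,2,0]"
  unfolding bad3_def contains_101 contains_120 by (rule refl)
lemma bad4_contains: "bad4 y \<longleftrightarrow> contains y [0,1,0,1] \<or> contains y [0,1,2,0]"
  unfolding bad4_def contains_0101 contains_0120 by (rule refl)

lemma bad3_mono: "bad3 x \<Longrightarrow> subseq x y \<Longrightarrow> bad3 y"
  unfolding bad3_contains using contains_mono by blast
lemma bad4_mono: "bad4 x \<Longrightarrow> subseq x y \<Longrightarrow> bad4 y"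
  unfolding bad4_contains using contains_mono by blast

lemma bad_ins: "bad3 (x@[v]) \<and> bad4 (x@[v]) \<Longrightarrow> bad3 ((x@[w])@[v]) \<and> bad4 ((x@[w])@[v])"
  using bad3_mono bad4_mono subseq_snoc2[of x v w] by auto

lemma contains_I: "subseq ys y \<Longrightarrow> red ys = p \<Longrightarrow> contains y p"
  unfolding contains_def by blast

lemma W1:
  assumes "1 \<le> M" "subseq [M-1, M] x"
  shows "bad3 ((x@[Suc M])@[M-1]) \<and> bad4 ((x@[Suc M])@[M-1])"
proof -
  have "subseq [M] x" by (rule subseq_Cons'[OF assms(2)])
  then have "subseq ([M]@[Suc M, M-1]) (x@[Suc M, M-1])"
    by (rule list_emb_append_mono) (rule list_emb_refl, simp)
  moreover have "red [M, Suc M, M-1] = [1,2,0]" unfolding R120 using assms by simp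
  ultimately have "contains (x@[Suc M, M-1]) [1,2,0]" by (simp add: contains_I)
  then have 3: "bad3 (x@[Suc M, M-1])" unfolding bad3_contains by simp
  have "subseq ([M-1,M]@[Suc M, M-1]) (x@[Suc M, M-1])"
    using assms(2) by (rule list_emb_append_mono) (rule list_emb_refl, simp)
  moreover have "red [M-1, M, Suc M, M-1] = [0,1,2,0]" unfolding R0120 using assms by simp
  ultimately have "contains (x@[Suc M, M-1]) [0,1,2,0]" by (simp add: contains_I)
  then have 4: "bad4 (x@[Suc M, M-1])" unfolding bad4_contains by simp
  show ?thesis using 3 4 by simp
qed

lemma W2:
  assumes "1 \<le> M" "subseq [M-1, M] x"
  shows "bad3 ((x@[M-1])@[M]) \<and> bad4 ((x@[M-1])@[M])"
proof -
  have "subseq [M] x" by (rule subseq_Cons'[OF assms(2)])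
  then have "subseq ([M]@[M-1, M]) (x@[M-1, M])"
    by (rule list_emb_append_mono) (rule list_emb_refl, simp)
  moreover have "red [M, M-1, M] = [1,0,1]" unfolding R101 using assms by simp
  ultimately have "contains (x@[M-1, M]) [1,0,1]" by (simp add: contains_I)
  then have 3: "bad3 (x@[M-1, M])" unfolding bad3_contains by simp
  have "subseq ([M-1,M]@[M-1, M]) (x@[M-1, M])"
    using assms(2) by (rule list_emb_append_mono) (rule list_emb_refl, simp)
  moreover have "red [M-1, M, M-1, M] = [0,1,0,1]" unfolding R0101 using assms by simp
  ultimately have "contains (x@[M-1, M]) [0,1,0,1]" by (simp add: contains_I)
  then have 4: "bad4 (x@[M-1, M])" unfolding bad4_contains by simp
  show ?thesis using 3 4 by simp
qed

lemma last_nth: "x \<noteq> [] \<Longrightarrow> last x = x ! (length x - 1)"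
  by (simp add: last_conv_nth)

lemma NA_s:
  assumes "x \<noteq> []" "\<not> bad3 x" "\<not> bad4 x"
  shows "\<not> bad3 (x@[last x]) \<and> \<not> bad4 (x@[last x])"
proof -
  define n where "n = length x - 1"
  have n: "n < length x" "last x = x ! n" using assms(1) unfolding n_def by (auto simp: last_nth)
  have a: "\<not> c101 x" "\<not> c120 x" "\<not> c0101 x" "\<not> c0120 x" using assms unfolding bad3_def bad4_def by auto
  have "\<not> (\<exists>i j. i<j \<and> j<length x \<and> x!j < x!i \<and> last x = x!i)"
  proof
    assume "\<exists>i j. i<j \<and> j<length x \<and> x!j < x!i \<and> last x = x!i"
    then obtain i j where h: "i<j" "j<length x" "x!j < x!i" "last x = x!i" by blast
    then have "j \<noteq> n" using n by auto
    then have "j < n" using h n_def by simp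
    then show False using a(1) h n unfolding c101_def by auto
  qed
  moreover have "\<not> (\<exists>i j. i<j \<and> j<length x \<and> last x < x!i \<and> x!i < x!j)"
  proof
    assume "\<exists>i j. i<j \<and> j<length x \<and> last x < x!i \<and> x!i < x!j"
    then obtain i j where h: "i<j" "j<length x" "last x < x!i" "x!i < x!j" by blast
    then have "j \<noteq> n" using n by auto
    then have "j < n" using h n_def by simp
    then show False using a(2) h n unfolding c120_def by auto
  qed
  moreover have "\<not> (\<exists>i j k. i<j \<and> j<k \<and> k<length x \<and> x!i < x!j \<and> x!k = x!i \<and> last x = x!j)"
  proof
    assume "\<exists>i j k. i<j \<and> j<k \<and> k<length x \<and> x!i < x!j \<and> x!k = x!i \<and> last x = x!j"
    then obtain i j k where h: "i<j" "j<k" "k<length x" "x!i < x!j" "x!k = x!i" "last x = x!j" by blast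
    then have "k \<noteq> n" using n by auto
    then have "k < n" using h n_def by simp
    then show False using a(3) h n unfolding c0101_def by auto
  qed
  moreover have "\<not> (\<exists>i j k. i<j \<and> j<k \<and> k<length x \<and> x!i < x!j \<and> x!j < x!k \<and> last x = x!i)"
  proof
    assume "\<exists>i j k. i<j \<and> j<k \<and> k<length x \<and> x!i < x!j \<and> x!j < x!k \<and> last x = x!i"
    then obtain i j k where h: "i<j" "j<k" "k<length x" "x!i < x!j" "x!j < x!k" "last x = x!i" by blast
    then have "k \<noteq> n" using n by auto
    then have "k < n" using h n_def by simp
    then show False using a(4) h n unfolding c0120_def by auto
  qed
  ultimately show ?thesis unfolding bad3_def bad4_def c101_snoc c120_snoc c0101_snoc c0120_snoc using a by blast
qed

lemma NA_u:
  assumes "\<not> bad3 x" "\<not> bad4 x"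
  shows "\<not> bad3 (x@[Suc (mx x)]) \<and> \<not> bad4 (x@[Suc (mx x)])"
proof -
  have le: "\<And>i. i < length x \<Longrightarrow> x!i < Suc (mx x)" using nth_le_mx by (simp add: le_imp_less_Suc)
  have "\<not> (\<exists>i j. i<j \<and> j<length x \<and> x!j < x!i \<and> Suc (mx x) = x!i)"
    using le by (metis less_trans less_irrefl)
  moreover have "\<not> (\<exists>i j. i<j \<and> j<length x \<and> Suc (mx x) < x!i \<and> x!i < x!j)"
    using le by (metis less_trans less_not_sym)
  moreover have "\<not> (\<exists>i j k. i<j \<and> j<k \<and> k<length x \<and> x!i < x!j \<and> x!k = x!i \<and> Suc (mx x) = x!j)"
    using le by (metis less_trans less_irrefl)
  moreover have "\<not> (\<exists>i j k. i<j \<and> j<k \<and> k<length x \<and> x!i < x!j \<and> x!j < x!k \<and> Suc (mx x) = x!i)"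
    using le by (metis less_trans less_irrefl)
  ultimately show ?thesis using assms unfolding bad3_def bad4_def c101_snoc c120_snoc c0101_snoc c0120_snoc by blast
qed

lemma NA_d:
  assumes "\<not> bad3 x" "\<not> bad4 x" "nfs x (mx x - 1)"
  shows "\<not> bad3 (x@[mx x - 1]) \<and> \<not> bad4 (x@[mx x - 1])"
proof -
  have le: "\<And>i. i < length x \<Longrightarrow> x!i \<le> mx x" using nth_le_mx by simp
  have nf: "\<And>i j. i<j \<Longrightarrow> j<length x \<Longrightarrow> x!i = mx x - 1 \<Longrightarrow> mx x - 1 \<le> x!j"
    using assms(3) unfolding nfs_def by blast
  have "\<not> (\<exists>i j. i<j \<and> j<length x \<and> x!j < x!i \<and> mx x - 1 = x!i)"
  proof
    assume "\<exists>i j. i<j \<and> j<length x \<and> x!j < x!i \<and> mx x - 1 = x!i"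
    then obtain i j where h: "i<j" "j<length x" "x!j < x!i" "mx x - 1 = x!i" by blast
    have "mx x - 1 \<le> x!j" using nf[of i j] h by simp
    then show False using h by linarith
  qed
  moreover have "\<not> (\<exists>i j. i<j \<and> j<length x \<and> mx x - 1 < x!i \<and> x!i < x!j)"
  proof
    assume "\<exists>i j. i<j \<and> j<length x \<and> mx x - 1 < x!i \<and> x!i < x!j"
    then obtain i j where h: "i<j" "j<length x" "mx x - 1 < x!i" "x!i < x!j" by blast
    have "x!j \<le> mx x" "x!i \<le> mx x" using le h by auto
    then show False using h by linarith
  qed
  moreover have "\<not> (\<exists>i j k. i<j \<and> j<k \<and> k<length x \<and> x!i < x!j \<and> x!k = x!i \<and> mx x - 1 = x!j)"
  proof
    assume "\<exists>i j k. i<j \<and> j<k \<and> k<length x \<and> x!i < x!j \<and> x!k = x!i \<and> mx x - 1 = x!j"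
    then obtain i j k where h: "i<j" "j<k" "k<length x" "x!i < x!j" "x!k = x!i" "mx x - 1 = x!j" by blast
    have "mx x - 1 \<le> x!k" using nf[of j k] h by simp
    then show False using h by linarith
  qed
  moreover have "\<not> (\<exists>i j k. i<j \<and> j<k \<and> k<length x \<and> x!i < x!j \<and> x!j < x!k \<and> mx x - 1 = x!i)"
  proof
    assume "\<exists>i j k. i<j \<and> j<k \<and> k<length x \<and> x!i < x!j \<and> x!j < x!k \<and> mx x - 1 = x!i"
    then obtain i j k where h: "i<j" "j<k" "k<length x" "x!i < x!j" "x!j < x!k" "mx x - 1 = x!i" by blast
    have "x!k \<le> mx x" using le h by auto
    then show False using h by linarith
  qed
  ultimately show ?thesis using assms unfolding bad3_def bad4_def c101_snoc c120_snoc c0101_snoc c0120_snoc by blast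
qed


lemma InvI:
  assumes "x \<noteq> []" "ascent_seq x" "\<not> bad3 x" "\<not> bad4 x" "asc x = mx x" "s \<le> 2"
    "s = 0 \<Longrightarrow> last x = mx x \<and> nfs x (mx x) \<and> (mx x = 0 \<or> \<not> nfs x (mx x - 1))"
    "s = 1 \<Longrightarrow> last x = mx x \<and> 1 \<le> mx x \<and> nfs x (mx x) \<and> nfs x (mx x - 1) \<and> subseq [mx x - 1, mx x] x"
    "s = 2 \<Longrightarrow> last x = mx x - 1 \<and> 1 \<le> mx x \<and> subseq [mx x - 1, mx x] x"
    "\<And>v. v \<le> Suc (mx x) \<Longrightarrow> \<not> allowed s x v \<Longrightarrow> bad3 (x@[v]) \<and> bad4 (x@[v])"
  shows "Inv x s"
  unfolding Inv_def using assms by blast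

lemma InvD:
  assumes "Inv x s"
  shows "x \<noteq> []" "ascent_seq x" "\<not> bad3 x" "\<not> bad4 x" "asc x = mx x" "s \<le> 2"
    "s = 0 \<Longrightarrow> last x = mx x \<and> nfs x (mx x) \<and> (mx x = 0 \<or> \<not> nfs x (mx x - 1))"
    "s = 1 \<Longrightarrow> last x = mx x \<and> 1 \<le> mx x \<and> nfs x (mx x) \<and> nfs x (mx x - 1) \<and> subseq [mx x - 1, mx x] x"
    "s = 2 \<Longrightarrow> last x = mx x - 1 \<and> 1 \<le> mx x \<and> subseq [mx x - 1, mx x] x"
    "\<And>v. v \<le> Suc (mx x) \<Longrightarrow> \<not> allowed s x v \<Longrightarrow> bad3 (x@[v]) \<and> bad4 (x@[v])"
  using assms unfolding Inv_def by blast+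

lemma inv_init: "Inv [0] 0"
proof (rule InvI)
  show "\<not> bad3 [0]" unfolding bad3_def c101_def c120_def by auto
  show "\<not> bad4 [0]" unfolding bad4_def c0101_def c0120_def by auto
  show "asc [0] = mx [0]" unfolding asc_def mx_def by simp
  show "(0::nat) = 0 \<Longrightarrow> last [0] = mx [0] \<and> nfs [0] (mx [0]) \<and> (mx [0] = 0 \<or> \<not> nfs [0] (mx [0] - 1))"
    unfolding mx_def nfs_def by simp
  fix v assume "v \<le> Suc (mx [0])" "\<not> allowed 0 [0] v"
  then show "bad3 ([0]@[v]) \<and> bad4 ([0]@[v])" unfolding allowed_def mx_def by simp
qed (simp_all add: ascent_seq_single)

lemma nfs_big:
  assumes "\<And>a. a \<in> set x \<Longrightarrow> a < w"
  shows "nfs x w"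
  unfolding nfs_def
proof (intro allI impI)
  fix i j assume h: "i < j \<and> j < length x \<and> x ! i = w"
  then have "x!i \<in> set x" by (intro nth_mem) simp
  then have "x!i < w" using assms by blast
  then show "w \<le> x!j" using h by simp
qed

lemma last_le_mx: "x \<noteq> [] \<Longrightarrow> last x \<le> mx x"
  by (rule mx_ge) simp

lemma inv_s:
  assumes I: "Inv x s"
  shows "Inv (x@[last x]) s"
proof -
  note D = InvD[OF I]
  have ne: "x \<noteq> []" by (rule D(1))
  have lM: "last x \<le> mx x" using last_le_mx[OF ne] .
  have mx': "mx (x@[last x]) = mx x" using mx_snoc[OF ne] lM by simp
  have asc': "asc (x@[last x]) = asc x" using asc_snoc[OF ne] by simp
  have last': "last (x@[last x]) = last x" by simp
  have al: "\<And>v. allowed s (x@[last x]) v \<longleftrightarrow> allowed s x v"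
    unfolding allowed_def last' mx' by simp
  show ?thesis
  proof (rule InvI)
    show "x @ [last x] \<noteq> []" by simp
    show "ascent_seq (x@[last x])" using ascent_seq_snoc[OF ne] D(2) D(5) lM by simp
    show "\<not> bad3 (x@[last x])" "\<not> bad4 (x@[last x])" using NA_s[OF ne D(3) D(4)] by simp_all
    show "asc (x@[last x]) = mx (x@[last x])" using asc' mx' D(5) by simp
    show "s \<le> 2" by (rule D(6))
    show "s = 0 \<Longrightarrow> last (x@[last x]) = mx (x@[last x]) \<and> nfs (x@[last x]) (mx (x@[last x])) \<and> (mx (x@[last x]) = 0 \<or> \<not> nfs (x@[last x]) (mx (x@[last x]) - 1))"
      using D(7) unfolding mx' last' nfs_snoc by auto
    show "s = 1 \<Longrightarrow> last (x@[last x]) = mx (x@[last x]) \<and> 1 \<le> mx (x@[last x]) \<and> nfs (x@[last x]) (mx (x@[last x])) \<and> nfs (x@[last x]) (mx (x@[last x]) - 1) \<and> subseq [mx (x@[last x]) - 1, mx (x@[last x])] (x@[last x])"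
      using D(8) unfolding mx' last' nfs_snoc by (auto intro: list_emb_prefix)
    show "s = 2 \<Longrightarrow> last (x@[last x]) = mx (x@[last x]) - 1 \<and> 1 \<le> mx (x@[last x]) \<and> subseq [mx (x@[last x]) - 1, mx (x@[last x])] (x@[last x])"
      using D(9) unfolding mx' last' by (auto intro: list_emb_prefix)
    fix v assume "v \<le> Suc (mx (x@[last x]))" "\<not> allowed s (x@[last x]) v"
    then have "v \<le> Suc (mx x)" "\<not> allowed s x v" using mx' al by simp_all
    then show "bad3 ((x@[last x])@[v]) \<and> bad4 ((x@[last x])@[v])" using D(10) bad_ins by blast
  qed
qed

lemma u_facts:
  assumes I: "Inv x s"
  shows "mx (x@[Suc (mx x)]) = Suc (mx x)" "asc (x@[Suc (mx x)]) = Suc (mx x)"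
    "ascent_seq (x@[Suc (mx x)])" "\<not> bad3 (x@[Suc (mx x)])" "\<not> bad4 (x@[Suc (mx x)])"
    "nfs (x@[Suc (mx x)]) (Suc (mx x))" "subseq [mx x, Suc (mx x)] (x@[Suc (mx x)])"
    "last (x@[Suc (mx x)]) = Suc (mx x)"
proof -
  note D = InvD[OF I]
  have ne: "x \<noteq> []" by (rule D(1))
  show "mx (x@[Suc (mx x)]) = Suc (mx x)" using mx_snoc[OF ne] by simp
  show "asc (x@[Suc (mx x)]) = Suc (mx x)" using asc_snoc[OF ne] last_le_mx[OF ne] D(5) by simp
  show "ascent_seq (x@[Suc (mx x)])" using ascent_seq_snoc[OF ne] D(2) D(5) by simp
  show "\<not> bad3 (x@[Suc (mx x)])" "\<not> bad4 (x@[Suc (mx x)])" using NA_u[OF D(3) D(4)] by simp_all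
  have "nfs x (Suc (mx x))" by (rule nfs_big) (simp add: mx_ge le_imp_less_Suc)
  moreover have "Suc (mx x) \<notin> set x" using mx_ge by fastforce
  ultimately show "nfs (x@[Suc (mx x)]) (Suc (mx x))" unfolding nfs_snoc by simp
  have "subseq [mx x] x" using mx_in[OF ne] by (simp add: subseq_singleton_left)
  then have "subseq ([mx x]@[Suc (mx x)]) (x@[Suc (mx x)])"
    by (rule list_emb_append_mono) simp
  then show "subseq [mx x, Suc (mx x)] (x@[Suc (mx x)])" by simp
  show "last (x@[Suc (mx x)]) = Suc (mx x)" by simp
qed

lemma inv_u01:
  assumes I: "Inv x s" and s: "s = 0 \<or> s = 1"
  shows "Inv (x@[Suc (mx x)]) 1"
proof -
  note D = InvD[OF I]
  note U = u_facts[OF I]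
  define M where "M = mx x"
  have ne: "x \<noteq> []" by (rule D(1))
  have lastM: "last x = M" using D(7) D(8) s unfolding M_def by blast
  have nfsM: "nfs x M" using D(7) D(8) s unfolding M_def by blast
  show ?thesis unfolding M_def[symmetric]
  proof (rule InvI)
    show "x @ [Suc M] \<noteq> []" by simp
    show "ascent_seq (x@[Suc M])" "\<not> bad3 (x@[Suc M])" "\<not> bad4 (x@[Suc M])" using U unfolding M_def by simp_all
    show "asc (x@[Suc M]) = mx (x@[Suc M])" using U unfolding M_def by simp
    show "1 \<le> (2::nat)" by simp
    show "(1::nat) = 0 \<Longrightarrow> last (x@[Suc M]) = mx (x@[Suc M]) \<and> nfs (x@[Suc M]) (mx (x@[Suc M])) \<and> (mx (x@[Suc M]) = 0 \<or> \<not> nfs (x@[Suc M]) (mx (x@[Suc M]) - 1))"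
      by simp
    show "(1::nat) = 2 \<Longrightarrow> last (x@[Suc M]) = mx (x@[Suc M]) - 1 \<and> 1 \<le> mx (x@[Suc M]) \<and> subseq [mx (x@[Suc M]) - 1, mx (x@[Suc M])] (x@[Suc M])"
      by simp
    have "nfs (x@[Suc M]) M" unfolding nfs_snoc using nfsM by simp
    then show "(1::nat) = 1 \<Longrightarrow> last (x@[Suc M]) = mx (x@[Suc M]) \<and> 1 \<le> mx (x@[Suc M]) \<and> nfs (x@[Suc M]) (mx (x@[Suc M])) \<and> nfs (x@[Suc M]) (mx (x@[Suc M]) - 1) \<and> subseq [mx (x@[Suc M]) - 1, mx (x@[Suc M])] (x@[Suc M])"
      using U unfolding M_def by simp
    fix v assume v: "v \<le> Suc (mx (x@[Suc M]))" "\<not> allowed 1 (x@[Suc M]) v"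
    then have v': "v \<noteq> Suc M" "v \<noteq> Suc (Suc M)" "v \<noteq> M" "v \<le> Suc (Suc M)"
      using U unfolding allowed_def M_def by auto
    show "bad3 ((x@[Suc M])@[v]) \<and> bad4 ((x@[Suc M])@[v])"
    proof (cases "s = 1 \<and> v = M - 1")
      case True
      then show ?thesis using W1[of M x] D(8) unfolding M_def by simp
    next
      case False
      then have "\<not> allowed s x v" using v' lastM s unfolding allowed_def M_def by auto
      moreover have "v \<le> Suc (mx x)" using v' unfolding M_def by simp
      ultimately show ?thesis using D(10) bad_ins by blast
    qed
  qed
qed

lemma inv_u2:
  assumes I: "Inv x 2"
  shows "Inv (x@[Suc (mx x)]) 0"
proof -
  note D = InvD[OF I]
  note U = u_facts[OF I]
  define M where "M = mx x"
  have ne: "x \<noteq> []" by (rule D(1))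
  have lastM: "last x = M - 1" "1 \<le> M" using D(9) unfolding M_def by simp_all
  have notnfs: "\<not> nfs x M"
  proof
    assume nf: "nfs x M"
    obtain i where i: "i < length x" "x!i = M" using mx_in[OF ne] unfolding M_def by (auto simp: in_set_conv_nth)
    have ln: "last x = x ! (length x - 1)" "length x - 1 < length x" using ne by (auto simp: last_nth)
    have "i \<noteq> length x - 1" using i ln lastM by auto
    then have "i < length x - 1" using i by simp
    then have "M \<le> x ! (length x - 1)" using nf i ln unfolding nfs_def by blast
    then show False using ln lastM by simp
  qed
  show ?thesis unfolding M_def[symmetric]
  proof (rule InvI)
    show "x @ [Suc M] \<noteq> []" by simp
    show "ascent_seq (x@[Suc M])" "\<not> bad3 (x@[Suc M])" "\<not> bad4 (x@[Suc M])" using U unfolding M_def by simp_all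
    show "asc (x@[Suc M]) = mx (x@[Suc M])" using U unfolding M_def by simp
    show "0 \<le> (2::nat)" by simp
    have "\<not> nfs (x@[Suc M]) M" unfolding nfs_snoc using notnfs by simp
    then show "(0::nat) = 0 \<Longrightarrow> last (x@[Suc M]) = mx (x@[Suc M]) \<and> nfs (x@[Suc M]) (mx (x@[Suc M])) \<and> (mx (x@[Suc M]) = 0 \<or> \<not> nfs (x@[Suc M]) (mx (x@[Suc M]) - 1))"
      using U unfolding M_def by simp
    show "(0::nat) = 1 \<Longrightarrow> last (x@[Suc M]) = mx (x@[Suc M]) \<and> 1 \<le> mx (x@[Suc M]) \<and> nfs (x@[Suc M]) (mx (x@[Suc M])) \<and> nfs (x@[Suc M]) (mx (x@[Suc M]) - 1) \<and> subseq [mx (x@[Suc M]) - 1, mx (x@[Suc M])] (x@[Suc M])"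
      by simp
    show "(0::nat) = 2 \<Longrightarrow> last (x@[Suc M]) = mx (x@[Suc M]) - 1 \<and> 1 \<le> mx (x@[Suc M]) \<and> subseq [mx (x@[Suc M]) - 1, mx (x@[Suc M])] (x@[Suc M])"
      by simp
    fix v assume v: "v \<le> Suc (mx (x@[Suc M]))" "\<not> allowed 0 (x@[Suc M]) v"
    then have v': "v \<noteq> Suc M" "v \<noteq> Suc (Suc M)" "v \<le> Suc (Suc M)"
      using U unfolding allowed_def M_def by auto
    show "bad3 ((x@[Suc M])@[v]) \<and> bad4 ((x@[Suc M])@[v])"
    proof (cases "v = M - 1")
      case True
      then show ?thesis using W1[of M x] D(9) unfolding M_def by simp
    next
      case False
      then have "\<not> allowed 2 x v" using v' lastM unfolding allowed_def M_def by auto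
      moreover have "v \<le> Suc (mx x)" using v' unfolding M_def by simp
      ultimately show ?thesis using D(10) bad_ins by blast
    qed
  qed
qed

lemma inv_d:
  assumes I: "Inv x 1"
  shows "Inv (x@[mx x - 1]) 2"
proof -
  note D = InvD[OF I]
  define M where "M = mx x"
  have ne: "x \<noteq> []" by (rule D(1))
  have st: "last x = M" "1 \<le> M" "nfs x (M - 1)" "subseq [M-1, M] x" using D(8) unfolding M_def by simp_all
  have mx': "mx (x@[M-1]) = M" using mx_snoc[OF ne] unfolding M_def by simp
  have asc': "asc (x@[M-1]) = asc x" using asc_snoc[OF ne] st by simp
  show ?thesis unfolding M_def[symmetric]
  proof (rule InvI)
    show "x @ [M-1] \<noteq> []" by simp
    show "ascent_seq (x@[M-1])" using ascent_seq_snoc[OF ne] D(2) D(5) unfolding M_def by simp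
    show "\<not> bad3 (x@[M-1])" "\<not> bad4 (x@[M-1])" using NA_d[OF D(3) D(4)] st unfolding M_def by simp_all
    show "asc (x@[M-1]) = mx (x@[M-1])" using asc' mx' D(5) unfolding M_def by simp
    show "2 \<le> (2::nat)" by simp
    show "(2::nat) = 0 \<Longrightarrow> last (x@[M-1]) = mx (x@[M-1]) \<and> nfs (x@[M-1]) (mx (x@[M-1])) \<and> (mx (x@[M-1]) = 0 \<or> \<not> nfs (x@[M-1]) (mx (x@[M-1]) - 1))"
      by simp
    show "(2::nat) = 1 \<Longrightarrow> last (x@[M-1]) = mx (x@[M-1]) \<and> 1 \<le> mx (x@[M-1]) \<and> nfs (x@[M-1]) (mx (x@[M-1])) \<and> nfs (x@[M-1]) (mx (x@[M-1]) - 1) \<and> subseq [mx (x@[M-1]) - 1, mx (x@[M-1])] (x@[M-1])"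
      by simp
    show "(2::nat) = 2 \<Longrightarrow> last (x@[M-1]) = mx (x@[M-1]) - 1 \<and> 1 \<le> mx (x@[M-1]) \<and> subseq [mx (x@[M-1]) - 1, mx (x@[M-1])] (x@[M-1])"
      using st mx' by (auto intro: list_emb_prefix)
    fix v assume v: "v \<le> Suc (mx (x@[M-1]))" "\<not> allowed 2 (x@[M-1]) v"
    then have v': "v \<noteq> M - 1" "v \<noteq> Suc M" "v \<le> Suc M"
      using mx' unfolding allowed_def by auto
    show "bad3 ((x@[M-1])@[v]) \<and> bad4 ((x@[M-1])@[v])"
    proof (cases "v = M")
      case True
      then show ?thesis using W2[of M x] st by simp
    next
      case False
      then have "\<not> allowed 1 x v" using v' st unfolding allowed_def M_def by auto
      moreover have "v \<le> Suc (mx x)" using v' unfolding M_def by simp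
      ultimately show ?thesis using D(10) bad_ins by blast
    qed
  qed
qed

lemma gen_inv: "gen x s \<Longrightarrow> Inv x s"
proof (induction rule: gen.induct)
  case g0 then show ?case by (rule inv_init)
next
  case (gs x s) then show ?case using inv_s by blast
next
  case (gu0 x) then show ?case using inv_u01 by blast
next
  case (gu1 x) then show ?case using inv_u01 by blast
next
  case (gd x) then show ?case using inv_d by blast
next
  case (gu2 x) then show ?case using inv_u2 by blast
qed


lemma gen_ne: "gen x s \<Longrightarrow> x \<noteq> []"
  using gen_inv InvD(1) by blast

lemma subseq_snoc: "subseq y (y@[v])"
  by (rule list_emb_prefix) (rule list_emb_refl, simp)

lemma gen_complete:
  "x \<noteq> [] \<Longrightarrow> ascent_seq x \<Longrightarrow> \<not> bad3 x \<or> \<not> bad4 x \<Longrightarrow> \<exists>s. gen x s"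
proof (induction x rule: rev_induct)
  case Nil then show ?case by simp
next
  case (snoc v y)
  show ?case
  proof (cases "y = []")
    case True
    then have "v = 0" using snoc.prems ascent_seq_single by simp
    then show ?thesis using True g0 by auto
  next
    case False
    have a: "ascent_seq y" "v \<le> 1 + asc y" using snoc.prems(2) ascent_seq_snoc[OF False] by simp_all
    have "\<not> bad3 y \<or> \<not> bad4 y" using snoc.prems(3) bad3_mono bad4_mono subseq_snoc by blast
    then obtain s where g: "gen y s" using snoc.IH False a by blast
    note D = InvD[OF gen_inv[OF g]]
    have vb: "v \<le> Suc (mx y)" using a D(5) by simp
    show ?thesis
    proof (cases "allowed s y v")
      case True
      then consider "v = last y" | "v = Suc (mx y)" | "s = 1 \<and> v = mx y - 1" unfolding allowed_def by blast
      then show ?thesis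
      proof cases
        case 1 then show ?thesis using gs[OF g] by blast
      next
        case 2
        have "s = 0 \<or> s = 1 \<or> s = 2" using D(6) by arith
        then show ?thesis using gu0 gu1 gu2 g 2 by blast
      next
        case 3 then show ?thesis using gd g by blast
      qed
    next
      case False
      then have "bad3 (y@[v]) \<and> bad4 (y@[v])" using D(10) vb by blast
      then show ?thesis using snoc.prems(3) by blast
    qed
  qed
qed

lemma avoids2: "avoids_all x {p, q} \<longleftrightarrow> \<not> contains x p \<and> \<not> contains x q"
  unfolding avoids_all_def by blast

lemma setB:
  assumes "1 \<le> n"
  shows "{x. length x = n \<and> ascent_seq x \<and> avoids_all x {[1,0,1],[1,2,0]}} = {x. length x = n \<and> (\<exists>s. gen x s)}"
proof (rule set_eqI)
  fix x
  have "avoids_all x {[1,0,1],[1,2,0]} \<longleftrightarrow> \<not> bad3 x" unfolding avoids2 bad3_contains by blast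
  moreover have "length x = n \<Longrightarrow> x \<noteq> []" using assms by auto
  ultimately show "x \<in> {x. length x = n \<and> ascent_seq x \<and> avoids_all x {[1,0,1],[1,2,0]}} \<longleftrightarrow> x \<in> {x. length x = n \<and> (\<exists>s. gen x s)}"
    using gen_complete gen_inv InvD(2,3) by blast
qed

lemma setA:
  assumes "1 \<le> n"
  shows "{x. length x = n \<and> ascent_seq x \<and> avoids_all x {[0,1,0,1],[0,1,2,0]}} = {x. length x = n \<and> (\<exists>s. gen x s)}"
proof (rule set_eqI)
  fix x
  have "avoids_all x {[0,1,0,1],[0,1,2,0]} \<longleftrightarrow> \<not> bad4 x" unfolding avoids2 bad4_contains by blast
  moreover have "length x = n \<Longrightarrow> x \<noteq> []" using assms by auto
  ultimately show "x \<in> {x. length x = n \<and> ascent_seq x \<and> avoids_all x {[0,1,0,1],[0,1,2,0]}} \<longleftrightarrow> x \<in> {x. length x = n \<and> (\<exists>s. gen x s)}"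
    using gen_complete gen_inv InvD(2,4) by blast
qed

lemma gen_unique: "gen x s \<Longrightarrow> gen x t \<Longrightarrow> s = t"
proof -
  assume a: "gen x s" "gen x t"
  note D1 = InvD[OF gen_inv[OF a(1)]]
  note D2 = InvD[OF gen_inv[OF a(2)]]
  have "\<And>s t. Inv x s \<Longrightarrow> Inv x t \<Longrightarrow> s = 2 \<Longrightarrow> t = 2"
  proof -
    fix s t assume i: "Inv x s" "Inv x t" "s = 2"
    note E1 = InvD[OF i(1)]
    note E2 = InvD[OF i(2)]
    have "last x = mx x - 1" "1 \<le> mx x" using E1(9) i(3) by simp_all
    then have "last x \<noteq> mx x" by simp
    then have "t \<noteq> 0" "t \<noteq> 1" using E2(7) E2(8) by auto
    then show "t = 2" using E2(6) by simp
  qed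
  moreover have "\<And>s t. Inv x s \<Longrightarrow> Inv x t \<Longrightarrow> s = 1 \<Longrightarrow> t = 1"
  proof -
    fix s t assume i: "Inv x s" "Inv x t" "s = 1"
    note E1 = InvD[OF i(1)]
    note E2 = InvD[OF i(2)]
    have "1 \<le> mx x" "nfs x (mx x - 1)" "last x = mx x" using E1(8) i(3) by simp_all
    then have "t \<noteq> 0" "t \<noteq> 2" using E2(7) E2(9) by auto
    then show "t = 1" using E2(6) by simp
  qed
  ultimately show "s = t" using gen_inv[OF a(1)] gen_inv[OF a(2)] D1(6) D2(6)
    by (metis One_nat_def le_SucE le_zero_eq numeral_2_eq_2)
qed

definition G :: "nat \<Rightarrow> nat \<Rightarrow> nat list set" where
  "G n s = {x. length x = n \<and> gen x s}"

lemma G_finite: "finite (G n s)"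
proof -
  have "G n s \<subseteq> {xs. set xs \<subseteq> {0..n} \<and> length xs = n}"
  proof
    fix x assume "x \<in> G n s"
    then have "length x = n" "ascent_seq x" using gen_inv InvD(2) unfolding G_def by auto
    then show "x \<in> {xs. set xs \<subseteq> {0..n} \<and> length xs = n}" using ascent_seq_bound by auto
  qed
  moreover have "finite {xs. set xs \<subseteq> {0..n::nat} \<and> length xs = n}" by (rule finite_lists_length_eq) simp
  ultimately show ?thesis by (rule finite_subset)
qed

lemma inj_snoc: "inj_on (\<lambda>x. x @ [f x]) A"
  unfolding inj_on_def by simp

lemma card_snoc: "card ((\<lambda>x. x @ [f x]) ` A) = card A"
  by (rule card_image[OF inj_snoc])

lemma gen_snoc_cases:
  assumes "gen x' s'" "2 \<le> length x'"
  shows "\<exists>x s. x' = x @ [last x] \<and> gen x s \<and> s' = s \<or>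
              x' = x @ [Suc (mx x)] \<and> gen x s \<and> ((s = 0 \<and> s' = 1) \<or> (s = 1 \<and> s' = 1) \<or> (s = 2 \<and> s' = 0)) \<or>
              x' = x @ [mx x - 1] \<and> gen x s \<and> s = 1 \<and> s' = 2"
  using assms by (cases rule: gen.cases) auto

lemma G_step0:
  assumes "1 \<le> n"
  shows "G (Suc n) 0 = (\<lambda>x. x@[last x]) ` G n 0 \<union> (\<lambda>x. x@[Suc (mx x)]) ` G n 2"
proof (rule set_eqI)
  fix x'
  show "x' \<in> G (Suc n) 0 \<longleftrightarrow> x' \<in> (\<lambda>x. x@[last x]) ` G n 0 \<union> (\<lambda>x. x@[Suc (mx x)]) ` G n 2"
  proof
    assume "x' \<in> G (Suc n) 0"
    then have h: "gen x' 0" "length x' = Suc n" unfolding G_def by auto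
    then have "2 \<le> length x'" using assms by simp
    then obtain x s where "x' = x @ [last x] \<and> gen x s \<and> 0 = s \<or>
              x' = x @ [Suc (mx x)] \<and> gen x s \<and> ((s = 0 \<and> (0::nat) = 1) \<or> (s = 1 \<and> (0::nat) = 1) \<or> (s = 2 \<and> (0::nat) = 0)) \<or>
              x' = x @ [mx x - 1] \<and> gen x s \<and> s = 1 \<and> (0::nat) = 2"
      using gen_snoc_cases[OF h(1)] by blast
    then show "x' \<in> (\<lambda>x. x@[last x]) ` G n 0 \<union> (\<lambda>x. x@[Suc (mx x)]) ` G n 2"
      using h(2) unfolding G_def by auto
  next
    assume "x' \<in> (\<lambda>x. x@[last x]) ` G n 0 \<union> (\<lambda>x. x@[Suc (mx x)]) ` G n 2"
    then show "x' \<in> G (Suc n) 0" unfolding G_def using gs gu2 by auto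
  qed
qed

lemma G_step1:
  assumes "1 \<le> n"
  shows "G (Suc n) 1 = (\<lambda>x. x@[last x]) ` G n 1 \<union> (\<lambda>x. x@[Suc (mx x)]) ` (G n 0 \<union> G n 1)"
proof (rule set_eqI)
  fix x'
  show "x' \<in> G (Suc n) 1 \<longleftrightarrow> x' \<in> (\<lambda>x. x@[last x]) ` G n 1 \<union> (\<lambda>x. x@[Suc (mx x)]) ` (G n 0 \<union> G n 1)"
  proof
    assume "x' \<in> G (Suc n) 1"
    then have h: "gen x' 1" "length x' = Suc n" unfolding G_def by auto
    then have "2 \<le> length x'" using assms by simp
    then obtain x s where "x' = x @ [last x] \<and> gen x s \<and> 1 = s \<or>
              x' = x @ [Suc (mx x)] \<and> gen x s \<and> ((s = 0 \<and> (1::nat) = 1) \<or> (s = 1 \<and> (1::nat) = 1) \<or> (s = 2 \<and> (1::nat) = 0)) \<or>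
              x' = x @ [mx x - 1] \<and> gen x s \<and> s = 1 \<and> (1::nat) = 2"
      using gen_snoc_cases[OF h(1)] by blast
    then show "x' \<in> (\<lambda>x. x@[last x]) ` G n 1 \<union> (\<lambda>x. x@[Suc (mx x)]) ` (G n 0 \<union> G n 1)"
      using h(2) unfolding G_def by auto
  next
    assume "x' \<in> (\<lambda>x. x@[last x]) ` G n 1 \<union> (\<lambda>x. x@[Suc (mx x)]) ` (G n 0 \<union> G n 1)"
    then show "x' \<in> G (Suc n) 1" unfolding G_def using gs gu0 gu1 by auto
  qed
qed

lemma G_step2:
  assumes "1 \<le> n"
  shows "G (Suc n) 2 = (\<lambda>x. x@[last x]) ` G n 2 \<union> (\<lambda>x. x@[mx x - 1]) ` G n 1"
proof (rule set_eqI)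
  fix x'
  show "x' \<in> G (Suc n) 2 \<longleftrightarrow> x' \<in> (\<lambda>x. x@[last x]) ` G n 2 \<union> (\<lambda>x. x@[mx x - 1]) ` G n 1"
  proof
    assume "x' \<in> G (Suc n) 2"
    then have h: "gen x' 2" "length x' = Suc n" unfolding G_def by auto
    then have "2 \<le> length x'" using assms by simp
    then obtain x s where "x' = x @ [last x] \<and> gen x s \<and> 2 = s \<or>
              x' = x @ [Suc (mx x)] \<and> gen x s \<and> ((s = 0 \<and> (2::nat) = 1) \<or> (s = 1 \<and> (2::nat) = 1) \<or> (s = 2 \<and> (2::nat) = 0)) \<or>
              x' = x @ [mx x - 1] \<and> gen x s \<and> s = 1 \<and> (2::nat) = 2"
      using gen_snoc_cases[OF h(1)] by blast
    then show "x' \<in> (\<lambda>x. x@[last x]) ` G n 2 \<union> (\<lambda>x. x@[mx x - 1]) ` G n 1"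
      using h(2) unfolding G_def by auto
  next
    assume "x' \<in> (\<lambda>x. x@[last x]) ` G n 2 \<union> (\<lambda>x. x@[mx x - 1]) ` G n 1"
    then show "x' \<in> G (Suc n) 2" unfolding G_def using gs gd by auto
  qed
qed

lemma G_disj: "s \<noteq> t \<Longrightarrow> G n s \<inter> G n t = {}"
  unfolding G_def using gen_unique by blast

lemma last_neq_Suc_mx: "gen x s \<Longrightarrow> last x \<noteq> Suc (mx x)"
  using gen_ne last_le_mx by fastforce

lemma cnt0:
  assumes "1 \<le> n"
  shows "card (G (Suc n) 0) = card (G n 0) + card (G n 2)"
proof -
  have "(\<lambda>x. x@[last x]) ` G n 0 \<inter> (\<lambda>x. x@[Suc (mx x)]) ` G n 2 = {}"
    unfolding G_def using last_neq_Suc_mx by auto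
  then show ?thesis unfolding G_step0[OF assms]
    by (simp add: card_Un_disjoint G_finite card_snoc)
qed

lemma cnt1:
  assumes "1 \<le> n"
  shows "card (G (Suc n) 1) = card (G n 1) + (card (G n 0) + card (G n 1))"
proof -
  have "(\<lambda>x. x@[last x]) ` G n 1 \<inter> (\<lambda>x. x@[Suc (mx x)]) ` (G n 0 \<union> G n 1) = {}"
    unfolding G_def using last_neq_Suc_mx by auto
  moreover have "card (G n 0 \<union> G n 1) = card (G n 0) + card (G n 1)"
    using G_disj[of 0 1 n] by (simp add: card_Un_disjoint G_finite)
  ultimately show ?thesis unfolding G_step1[OF assms]
    by (simp add: card_Un_disjoint G_finite card_snoc)
qed

lemma cnt2:
  assumes "1 \<le> n"
  shows "card (G (Suc n) 2) = card (G n 2) + card (G n 1)"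
proof -
  have "(\<lambda>x. x@[last x]) ` G n 2 \<inter> (\<lambda>x. x@[mx x - 1]) ` G n 1 = {}"
  proof (rule ccontr)
    assume "(\<lambda>x. x@[last x]) ` G n 2 \<inter> (\<lambda>x. x@[mx x - 1]) ` G n 1 \<noteq> {}"
    then obtain x y where xy: "x \<in> G n 2" "y \<in> G n 1" "x@[last x] = y@[mx y - 1]" by blast
    then have "x = y" by simp
    then have "gen x 2" "gen x 1" using xy unfolding G_def by auto
    then show False using gen_unique[of x 2 1] by simp
  qed
  then show ?thesis unfolding G_step2[OF assms]
    by (simp add: card_Un_disjoint G_finite card_snoc)
qed

lemma G1: "G 1 s = (if s = 0 then {[0]} else {})"
proof -
  have "\<And>x. gen x s \<Longrightarrow> length x = 1 \<Longrightarrow> x = [0] \<and> s = 0"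
  proof -
    fix x assume "gen x s" "length x = 1"
    then show "x = [0] \<and> s = 0"
    proof (induction rule: gen.induct)
      case g0 then show ?case by simp
    next
      case (gs x s) then show ?case using gen_ne[of x s] by simp
    next
      case (gu0 x) then show ?case using gen_ne[of x 0] by simp
    next
      case (gu1 x) then show ?case using gen_ne[of x 1] by simp
    next
      case (gd x) then show ?case using gen_ne[of x 1] by simp
    next
      case (gu2 x) then show ?case using gen_ne[of x 2] by simp
    qed
  qed
  note F = this
  show ?thesis
  proof (cases "s = 0")
    case True
    have "G 1 s = {[0]}"
    proof (rule set_eqI)
      fix x
      show "x \<in> G 1 s \<longleftrightarrow> x \<in> {[0]}"
      proof
        assume "x \<in> G 1 s" then show "x \<in> {[0]}" using F unfolding G_def by blast
      next
        assume "x \<in> {[0]}" then show "x \<in> G 1 s" using g0 True unfolding G_def by simp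
      qed
    qed
    then show ?thesis using True by simp
  next
    case False
    have "G 1 s = {}" using F False unfolding G_def by blast
    then show ?thesis using False by simp
  qed
qed

lemma setG: "{x. length x = n \<and> (\<exists>s. gen x s)} = G n 0 \<union> G n 1 \<union> G n 2"
proof -
  have "\<And>x s. gen x s \<Longrightarrow> s = 0 \<or> s = 1 \<or> s = 2"
    using gen_inv InvD(6) by fastforce
  then show ?thesis unfolding G_def by blast
qed

lemma card_setG: "card {x. length x = n \<and> (\<exists>s. gen x s)} = card (G n 0) + card (G n 1) + card (G n 2)"
proof -
  have "(G n 0 \<union> G n 1) \<inter> G n 2 = {}" using G_disj[of 0 2 n] G_disj[of 1 2 n] by auto
  then show ?thesis unfolding setG
    using G_disj[of 0 1 n] by (simp add: card_Un_disjoint G_finite)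
qed


definition c12 :: "nat list \<Rightarrow> bool" where
  "c12 x \<longleftrightarrow> (\<exists>i j. i<j \<and> j<length x \<and> x!i < x!j)"
definition c123 :: "nat list \<Rightarrow> bool" where
  "c123 x \<longleftrightarrow> (\<exists>i j k. i<j \<and> j<k \<and> k<length x \<and> x!i < x!j \<and> x!j < x!k)"

lemma nthL: "q < length a \<Longrightarrow> (a @ N # g) ! q = a ! q"
  by (simp add: nth_append)
lemma nthM: "(a @ N # g) ! length a = N"
  by simp
lemma nthR: "length a < q \<Longrightarrow> (a @ N # g) ! q = g ! (q - Suc (length a))"
  by (simp add: nth_append nth_Cons')
lemma lenJ: "length (a @ N # g) = Suc (length a + length g)"
  by simp

locale split3 =
  fixes a g :: "nat list" and N :: nat
  assumes aN: "\<And>x. x \<in> set a \<Longrightarrow> x < N"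
    and gN: "\<And>x. x \<in> set g \<Longrightarrow> x < N"
    and ag: "\<And>x y. x \<in> set a \<Longrightarrow> y \<in> set g \<Longrightarrow> x < y"
begin

abbreviation "s \<equiv> a @ N # g"

lemma aN': "q < length a \<Longrightarrow> a!q < N" using aN by simp
lemma gN': "q < length g \<Longrightarrow> g!q < N" using gN by simp
lemma ag': "q < length a \<Longrightarrow> r < length g \<Longrightarrow> a!q < g!r" using ag by simp

lemma s_le: "q < length s \<Longrightarrow> s!q \<le> N"
proof -
  assume q: "q < length s"
  consider "q < length a" | "q = length a" | "length a < q" by linarith
  then show "s!q \<le> N"
  proof cases
    case 1 then show ?thesis using aN' nthL by (metis less_imp_le)
  next
    case 2 then show ?thesis by simp
  next
    case 3
    then have "q - Suc (length a) < length g" using q by simp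
    then show ?thesis using gN' nthR[OF 3] by (metis less_imp_le)
  qed
qed

lemma c120_iff: "c120 s \<longleftrightarrow> c120 a \<or> c120 g"
proof
  assume "c120 s"
  then obtain i j k where h: "i<j" "j<k" "k<length s" "s!k < s!i" "s!i < s!j" unfolding c120_def by blast
  let ?a = "length a"
  consider "k < ?a" | "k = ?a" | "?a < k" by linarith
  then show "c120 a \<or> c120 g"
  proof cases
    case 1
    then have "a!k < a!i" "a!i < a!j" using h nthL[where a=a and N=N and g=g] by simp_all
    then have "c120 a" unfolding c120_def using h 1 by blast
    then show ?thesis by simp
  next
    case 2
    then have "s!k = N" by simp
    then show ?thesis using h s_le[of i] by simp
  next
    case 3
    have kg: "k - Suc ?a < length g" using h 3 by simp
    consider "i < ?a" | "i = ?a" | "?a < i" by linarith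
    then show ?thesis
    proof cases
      case 1
      then have "s!i < s!k" using nthL[OF 1] nthR[OF 3] ag'[OF 1 kg] by simp
      then show ?thesis using h by simp
    next
      case 2
      then show ?thesis using h s_le[of j] by simp
    next
      case 4: 3
      have "g!(k - Suc ?a) < g!(i - Suc ?a)" "g!(i - Suc ?a) < g!(j - Suc ?a)"
        using h nthR[where a=a and N=N and g=g] 4 by simp_all
      moreover have "i - Suc ?a < j - Suc ?a" "j - Suc ?a < k - Suc ?a" using h 4 by simp_all
      ultimately have "c120 g" unfolding c120_def using kg by blast
      then show ?thesis by simp
    qed
  qed
next
  assume "c120 a \<or> c120 g"
  then show "c120 s"
  proof
    assume "c120 a"
    then obtain i j k where h: "i<j" "j<k" "k<length a" "a!k < a!i" "a!i < a!j" unfolding c120_def by blast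
    then have "s!k < s!i" "s!i < s!j" using nthL[where a=a and N=N and g=g] by simp_all
    then show "c120 s" unfolding c120_def using h by (intro exI[of _ i] exI[of _ j] exI[of _ k]) simp
  next
    assume "c120 g"
    then obtain i j k where h: "i<j" "j<k" "k<length g" "g!k < g!i" "g!i < g!j" unfolding c120_def by blast
    let ?d = "Suc (length a)"
    have "s!(?d+k) < s!(?d+i)" "s!(?d+i) < s!(?d+j)" using h nthR[where a=a and N=N and g=g] by simp_all
    then show "c120 s" unfolding c120_def using h by (intro exI[of _ "?d+i"] exI[of _ "?d+j"] exI[of _ "?d+k"]) simp
  qed
qed

lemma c3012_iff: "c3012 s \<longleftrightarrow> c3012 a \<or> c3012 g \<or> c123 g"
proof
  assume "c3012 s"
  then obtain i j k l where h: "i<j" "j<k" "k<l" "l<length s" "s!j < s!k" "s!k < s!l" "s!l < s!i" unfolding c3012_def by blast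
  let ?a = "length a"
  consider "i < ?a" | "i = ?a" | "?a < i" by linarith
  then show "c3012 a \<or> c3012 g \<or> c123 g"
  proof cases
    case 1
    have la: "l < ?a"
    proof (rule ccontr)
      assume "\<not> l < ?a"
      then consider "l = ?a" | "?a < l" by linarith
      then show False
      proof cases
        case 1 then show False using h s_le[of i] by simp
      next
        case 2
        have "l - Suc ?a < length g" using h 2 by simp
        then have "s!i < s!l" using nthL[OF \<open>i < ?a\<close>] nthR[OF 2] ag'[OF \<open>i < ?a\<close>] by simp
        then show False using h by simp
      qed
    qed
    then have "a!j < a!k" "a!k < a!l" "a!l < a!i" using h nthL[where a=a and N=N and g=g] by simp_all
    then have "c3012 a" unfolding c3012_def using h la by blast
    then show ?thesis by simp
  next
    case 2
    have "g!(j - Suc ?a) < g!(k - Suc ?a)" "g!(k - Suc ?a) < g!(l - Suc ?a)"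
      using h nthR[where a=a and N=N and g=g] 2 by simp_all
    moreover have "j - Suc ?a < k - Suc ?a" "k - Suc ?a < l - Suc ?a" "l - Suc ?a < length g" using h 2 by simp_all
    ultimately have "c123 g" unfolding c123_def by blast
    then show ?thesis by simp
  next
    case 3
    have "g!(j - Suc ?a) < g!(k - Suc ?a)" "g!(k - Suc ?a) < g!(l - Suc ?a)" "g!(l - Suc ?a) < g!(i - Suc ?a)"
      using h nthR[where a=a and N=N and g=g] 3 by simp_all
    moreover have "i - Suc ?a < j - Suc ?a" "j - Suc ?a < k - Suc ?a" "k - Suc ?a < l - Suc ?a" "l - Suc ?a < length g" using h 3 by simp_all
    ultimately have "c3012 g" unfolding c3012_def by blast
    then show ?thesis by simp
  qed
next
  assume "c3012 a \<or> c3012 g \<or> c123 g"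
  then show "c3012 s"
  proof (elim disjE)
    assume "c3012 a"
    then obtain i j k l where h: "i<j" "j<k" "k<l" "l<length a" "a!j < a!k" "a!k < a!l" "a!l < a!i" unfolding c3012_def by blast
    then have "s!j < s!k" "s!k < s!l" "s!l < s!i" using nthL[where a=a and N=N and g=g] by simp_all
    then show "c3012 s" unfolding c3012_def using h by (intro exI[of _ i] exI[of _ j] exI[of _ k] exI[of _ l]) simp
  next
    assume "c3012 g"
    then obtain i j k l where h: "i<j" "j<k" "k<l" "l<length g" "g!j < g!k" "g!k < g!l" "g!l < g!i" unfolding c3012_def by blast
    let ?d = "Suc (length a)"
    have "s!(?d+j) < s!(?d+k)" "s!(?d+k) < s!(?d+l)" "s!(?d+l) < s!(?d+i)" using h nthR[where a=a and N=N and g=g] by simp_all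
    then show "c3012 s" unfolding c3012_def using h by (intro exI[of _ "?d+i"] exI[of _ "?d+j"] exI[of _ "?d+k"] exI[of _ "?d+l"]) simp
  next
    assume "c123 g"
    then obtain j k l where h: "j<k" "k<l" "l<length g" "g!j < g!k" "g!k < g!l" unfolding c123_def by blast
    let ?d = "Suc (length a)"
    have "s!(?d+j) < s!(?d+k)" "s!(?d+k) < s!(?d+l)" using h nthR[where a=a and N=N and g=g] by simp_all
    moreover have "s!(?d+l) < s!(length a)" using h nthR[where a=a and N=N and g=g] gN' by simp
    ultimately show "c3012 s" unfolding c3012_def using h by (intro exI[of _ "length a"] exI[of _ "?d+j"] exI[of _ "?d+k"] exI[of _ "?d+l"]) simp
  qed
qed

lemma c123_iff: "c123 s \<longleftrightarrow> c12 a \<or> c123 g \<or> (a \<noteq> [] \<and> c12 g)"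
proof
  assume "c123 s"
  then obtain i j k where h: "i<j" "j<k" "k<length s" "s!i < s!j" "s!j < s!k" unfolding c123_def by blast
  let ?a = "length a"
  consider "j < ?a" | "j = ?a" | "?a < j" by linarith
  then show "c12 a \<or> c123 g \<or> (a \<noteq> [] \<and> c12 g)"
  proof cases
    case 1
    then have "a!i < a!j" using h nthL[where a=a and N=N and g=g] by simp
    then have "c12 a" unfolding c12_def using h 1 by blast
    then show ?thesis by simp
  next
    case 2
    then show ?thesis using h s_le[of k] by simp
  next
    case 3
    have kg: "k - Suc ?a < length g" using h 3 by simp
    have gjk: "g!(j - Suc ?a) < g!(k - Suc ?a)" "j - Suc ?a < k - Suc ?a" using h nthR[where a=a and N=N and g=g] 3 by simp_all
    consider "i < ?a" | "i = ?a" | "?a < i" by linarith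
    then show ?thesis
    proof cases
      case 1
      then have "a \<noteq> []" by auto
      moreover have "c12 g" unfolding c12_def using gjk kg by blast
      ultimately show ?thesis by simp
    next
      case 2
      then show ?thesis using h s_le[of j] by simp
    next
      case 4: 3
      have "g!(i - Suc ?a) < g!(j - Suc ?a)" "i - Suc ?a < j - Suc ?a" using h nthR[where a=a and N=N and g=g] 4 by simp_all
      then have "c123 g" unfolding c123_def using gjk kg by blast
      then show ?thesis by simp
    qed
  qed
next
  assume "c12 a \<or> c123 g \<or> (a \<noteq> [] \<and> c12 g)"
  then show "c123 s"
  proof (elim disjE)
    assume "c12 a"
    then obtain i j where h: "i<j" "j<length a" "a!i < a!j" unfolding c12_def by blast
    then have "s!i < s!j" "s!j < s!(length a)" using nthL[where a=a and N=N and g=g] aN' by simp_all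
    then show "c123 s" unfolding c123_def using h by (intro exI[of _ i] exI[of _ j] exI[of _ "length a"]) simp
  next
    assume "c123 g"
    then obtain i j k where h: "i<j" "j<k" "k<length g" "g!i < g!j" "g!j < g!k" unfolding c123_def by blast
    let ?d = "Suc (length a)"
    have "s!(?d+i) < s!(?d+j)" "s!(?d+j) < s!(?d+k)" using h nthR[where a=a and N=N and g=g] by simp_all
    then show "c123 s" unfolding c123_def using h by (intro exI[of _ "?d+i"] exI[of _ "?d+j"] exI[of _ "?d+k"]) simp
  next
    assume "a \<noteq> [] \<and> c12 g"
    then obtain j k where h: "a \<noteq> []" "j<k" "k<length g" "g!j < g!k" unfolding c12_def by blast
    let ?d = "Suc (length a)"
    have a0: "0 < length a" using h by simp
    have "s!(?d+j) < s!(?d+k)" using h nthR[where a=a and N=N and g=g] by simp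
    moreover have "s!0 < s!(?d+j)" using h nthR[where a=a and N=N and g=g] nthL[OF a0] ag'[OF a0] by simp
    ultimately show "c123 s" unfolding c123_def using h a0 by (intro exI[of _ 0] exI[of _ "?d+j"] exI[of _ "?d+k"]) simp
  qed
qed

end


lemma perm_finite: "finite {s. is_perm k s}"
proof -
  have "{s. is_perm k s} \<subseteq> {xs. set xs \<subseteq> {1..k} \<and> length xs = k}" unfolding is_perm_def by auto
  moreover have "finite {xs. set xs \<subseteq> {1..k::nat} \<and> length xs = k}" by (rule finite_lists_length_eq) simp
  ultimately show ?thesis by (rule finite_subset)
qed

lemma perm_of_subset:
  assumes "distinct xs" "set xs \<subseteq> {1..m}" "length xs = m"
  shows "is_perm m xs"
proof -
  have "card (set xs) = m" using assms(1,3) distinct_card by metis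
  then have "set xs = {1..m}" using assms(2) by (intro card_subset_eq) simp_all
  then show ?thesis unfolding is_perm_def using assms by simp
qed

lemma perm_le: "is_perm k s \<Longrightarrow> x \<in> set s \<Longrightarrow> x \<le> k"
  unfolding is_perm_def by auto
lemma perm_ge: "is_perm k s \<Longrightarrow> x \<in> set s \<Longrightarrow> 1 \<le> x"
  unfolding is_perm_def by auto

lemma map_ex2: "(\<exists>i j. i<j \<and> j<length (map f xs) \<and> P ((map f xs)!i) ((map f xs)!j)) \<longleftrightarrow>
   (\<exists>i j. i<j \<and> j<length xs \<and> P (f (xs!i)) (f (xs!j)))"
proof
  assume "\<exists>i j. i<j \<and> j<length (map f xs) \<and> P ((map f xs)!i) ((map f xs)!j)"
  then obtain i j where h: "i<j" "j<length (map f xs)" "P ((map f xs)!i) ((map f xs)!j)" by blast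
  then have "P (f (xs!i)) (f (xs!j))" by simp
  then show "\<exists>i j. i<j \<and> j<length xs \<and> P (f (xs!i)) (f (xs!j))" using h by auto
next
  assume "\<exists>i j. i<j \<and> j<length xs \<and> P (f (xs!i)) (f (xs!j))"
  then obtain i j where h: "i<j" "j<length xs" "P (f (xs!i)) (f (xs!j))" by blast
  then show "\<exists>i j. i<j \<and> j<length (map f xs) \<and> P ((map f xs)!i) ((map f xs)!j)"
    using h by (intro exI[of _ i] exI[of _ j]) simp
qed

lemma map_ex3: "(\<exists>i j k. i<j \<and> j<k \<and> k<length (map f xs) \<and> P ((map f xs)!i) ((map f xs)!j) ((map f xs)!k)) \<longleftrightarrow>
   (\<exists>i j k. i<j \<and> j<k \<and> k<length xs \<and> P (f (xs!i)) (f (xs!j)) (f (xs!k)))"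
proof
  assume "\<exists>i j k. i<j \<and> j<k \<and> k<length (map f xs) \<and> P ((map f xs)!i) ((map f xs)!j) ((map f xs)!k)"
  then obtain i j k where h: "i<j" "j<k" "k<length (map f xs)" "P ((map f xs)!i) ((map f xs)!j) ((map f xs)!k)" by blast
  then have "P (f (xs!i)) (f (xs!j)) (f (xs!k))" by simp
  then show "\<exists>i j k. i<j \<and> j<k \<and> k<length xs \<and> P (f (xs!i)) (f (xs!j)) (f (xs!k))" using h by auto
next
  assume "\<exists>i j k. i<j \<and> j<k \<and> k<length xs \<and> P (f (xs!i)) (f (xs!j)) (f (xs!k))"
  then obtain i j k where h: "i<j" "j<k" "k<length xs" "P (f (xs!i)) (f (xs!j)) (f (xs!k))" by blast
  then show "\<exists>i j k. i<j \<and> j<k \<and> k<length (map f xs) \<and> P ((map f xs)!i) ((map f xs)!j) ((map f xs)!k)"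
    using h by (intro exI[of _ i] exI[of _ j] exI[of _ k]) simp
qed

lemma c12_shift: "c12 (map (\<lambda>v. v + d) xs) \<longleftrightarrow> c12 xs"
  unfolding c12_def using map_ex2[where f="\<lambda>v. v + d" and xs=xs and P="\<lambda>a b. a < b"] by simp
lemma c120_shift: "c120 (map (\<lambda>v. v + d) xs) \<longleftrightarrow> c120 xs"
  unfolding c120_def using map_ex3[where f="\<lambda>v. v + d" and xs=xs and P="\<lambda>a b c. c < a \<and> a < b"] by simp
lemma c123_shift: "c123 (map (\<lambda>v. v + d) xs) \<longleftrightarrow> c123 xs"
  unfolding c123_def using map_ex3[where f="\<lambda>v. v + d" and xs=xs and P="\<lambda>a b c. a < b \<and> b < c"] by simp

lemma c3012_c123: "c3012 xs \<Longrightarrow> c123 xs"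
proof -
  assume "c3012 xs"
  then obtain i j k l where h: "i<j" "j<k" "k<l" "l<length xs" "xs!j < xs!k" "xs!k < xs!l" unfolding c3012_def by blast
  then show "c123 xs" unfolding c123_def by (intro exI[of _ j] exI[of _ k] exI[of _ l]) simp
qed
lemma c120_c12: "c120 xs \<Longrightarrow> c12 xs"
proof -
  assume "c120 xs"
  then obtain i j k where h: "i<j" "j<k" "k<length xs" "xs!i < xs!j" unfolding c120_def by blast
  then show "c12 xs" unfolding c12_def by (intro exI[of _ i] exI[of _ j]) simp
qed
lemma c123_c12: "c123 xs \<Longrightarrow> c12 xs"
proof -
  assume "c123 xs"
  then obtain i j k where h: "i<j" "j<k" "k<length xs" "xs!i < xs!j" unfolding c123_def by blast
  then show "c12 xs" unfolding c12_def by (intro exI[of _ i] exI[of _ j]) simp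
qed

lemma build_perm:
  assumes a: "is_perm k a" and b: "is_perm m b"
  shows "is_perm (Suc (k+m)) (a @ Suc (k+m) # map (\<lambda>v. v+k) b)"
    and "split3 a (map (\<lambda>v. v+k) b) (Suc (k+m))"
proof -
  have sa: "set a = {1..k}" and sb: "set b = {1..m}" using a b unfolding is_perm_def by simp_all
  have smb: "set (map (\<lambda>v. v+k) b) \<subseteq> {Suc k..k+m}" using sb by auto
  show "split3 a (map (\<lambda>v. v+k) b) (Suc (k+m))"
  proof
    fix x assume "x \<in> set a" then show "x < Suc (k+m)" using sa by simp
  next
    fix x assume "x \<in> set (map (\<lambda>v. v+k) b)" then show "x < Suc (k+m)" using smb by auto
  next
    fix x y assume xy: "x \<in> set a" "y \<in> set (map (\<lambda>v. v+k) b)"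
    then have "x \<le> k" "Suc k \<le> y" using sa smb by auto
    then show "x < y" by simp
  qed
  have d: "distinct (map (\<lambda>v. v+k) b)" using b unfolding is_perm_def by (simp add: distinct_map)
  have n1: "Suc (k+m) \<notin> set a" using sa by simp
  have n2: "Suc (k+m) \<notin> set (map (\<lambda>v. v+k) b)" using smb by auto
  have n3: "set a \<inter> set (map (\<lambda>v. v+k) b) = {}"
  proof (rule ccontr)
    assume "set a \<inter> set (map (\<lambda>v. v+k) b) \<noteq> {}"
    then obtain x where "x \<in> set a" "x \<in> set (map (\<lambda>v. v+k) b)" by blast
    then have "x \<le> k" "Suc k \<le> x" using sa smb by auto
    then show False by simp
  qed
  have da: "distinct a" using a unfolding is_perm_def by simp
  have "distinct (a @ Suc (k+m) # map (\<lambda>v. v+k) b)"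
    using da d n1 n2 n3 by simp
  moreover have "set (a @ Suc (k+m) # map (\<lambda>v. v+k) b) \<subseteq> {1..Suc (k+m)}" using sa smb by auto
  moreover have "length (a @ Suc (k+m) # map (\<lambda>v. v+k) b) = Suc (k+m)" using a b unfolding is_perm_def by simp
  ultimately show "is_perm (Suc (k+m)) (a @ Suc (k+m) # map (\<lambda>v. v+k) b)" by (rule perm_of_subset)
qed

lemma split_perm:
  assumes p: "is_perm (Suc n) s" and nc: "\<not> c120 s"
  shows "\<exists>a b. s = a @ Suc n # map (\<lambda>v. v + length a) b \<and> is_perm (length a) a \<and> is_perm (n - length a) b \<and> length a \<le> n"
proof -
  have "Suc n \<in> set s" using p unfolding is_perm_def by simp
  then obtain a g where sp: "s = a @ Suc n # g" using split_list[of "Suc n" s] by blast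
  define k where "k = length a"
  have ds: "distinct s" and ss: "set s = {1..Suc n}" and ls: "length s = Suc n" using p unfolding is_perm_def by auto
  have dd: "distinct (a @ Suc n # g)" using ds sp by simp
  have da: "distinct a" and dg: "distinct g" and nA: "Suc n \<notin> set a" and nG: "Suc n \<notin> set g" and dis: "set a \<inter> set g = {}"
    using dd by auto
  have inA: "1 \<le> x \<and> x \<le> n" if x: "x \<in> set a" for x
  proof -
    have "x \<in> set s" using sp x by simp
    then have "x \<in> {1..Suc n}" using ss by simp
    moreover have "x \<noteq> Suc n" using nA x by auto
    ultimately show ?thesis by simp
  qed
  have inG: "1 \<le> x \<and> x \<le> n" if x: "x \<in> set g" for x
  proof -
    have "x \<in> set s" using sp x by simp
    then have "x \<in> {1..Suc n}" using ss by simp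
    moreover have "x \<noteq> Suc n" using nG x by auto
    ultimately show ?thesis by simp
  qed
  have ag: "x < y" if xy: "x \<in> set a" "y \<in> set g" for x y
  proof (rule ccontr)
    assume "\<not> x < y"
    moreover have "x \<noteq> y" using dis xy by auto
    ultimately have "y < x" by simp
    obtain i where i: "i < length a" "a!i = x" using xy(1) by (auto simp: in_set_conv_nth)
    obtain j where j: "j < length g" "g!j = y" using xy(2) by (auto simp: in_set_conv_nth)
    have "s!i = x" "s!(length a) = Suc n" "s!(Suc (length a) + j) = y" using sp i j by (simp_all add: nth_append)
    moreover have "x < Suc n" using inA[OF xy(1)] by simp
    moreover have "Suc (length a) + j < length s" using sp j by simp
    ultimately have "c120 s" unfolding c120_def using i \<open>y < x\<close>
      by (intro exI[of _ i] exI[of _ "length a"] exI[of _ "Suc (length a) + j"]) simp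
    then show False using nc by simp
  qed
  have sa: "set a \<subseteq> {1..k}"
  proof
    fix x assume x: "x \<in> set a"
    have "{1..x} \<subseteq> set a"
    proof
      fix y assume y: "y \<in> {1..x}"
      have yn: "1 \<le> y" "y \<le> x" using y by simp_all
      have "y \<in> set s" using ss inA[OF x] yn by simp
      moreover have "y \<noteq> Suc n" using yn inA[OF x] by simp
      moreover have "y \<notin> set g"
      proof
        assume "y \<in> set g" then have "x < y" by (rule ag[OF x])
        then show False using yn by simp
      qed
      ultimately show "y \<in> set a" using sp by simp
    qed
    then have "card {1..x} \<le> card (set a)" by (intro card_mono) simp_all
    then have "x \<le> k" using distinct_card[OF da] unfolding k_def by simp
    then show "x \<in> {1..k}" using inA[OF x] by simp
  qed
  have pa: "is_perm k a" using perm_of_subset[OF da sa] unfolding k_def by simp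
  then have saeq: "set a = {1..k}" unfolding is_perm_def by simp
  have lg: "length g = n - k" using ls sp unfolding k_def by simp
  have kn: "k \<le> n" using ls sp unfolding k_def by simp
  have gk: "k < y" if y: "y \<in> set g" for y
  proof (rule ccontr)
    assume "\<not> k < y"
    then have "y \<in> set a" using saeq inG[OF y] by simp
    then show False using dis y by auto
  qed
  define b where "b = map (\<lambda>v. v - k) g"
  have "map (\<lambda>v. v + k) b = map (\<lambda>v. v - k + k) g" unfolding b_def by simp
  also have "\<dots> = g" by (rule map_idI) (simp add: gk less_imp_le)
  finally have gb: "g = map (\<lambda>v. v + k) b" by simp
  have inj: "inj_on (\<lambda>v. v - k) (set g)"
  proof (rule inj_onI)
    fix x y assume "x \<in> set g" "y \<in> set g" "x - k = y - k"
    moreover have "k < x" "k < y" using gk \<open>x \<in> set g\<close> \<open>y \<in> set g\<close> by simp_all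
    ultimately show "x = y" by simp
  qed
  have db: "distinct b" unfolding b_def using dg inj by (simp add: distinct_map)
  have sb: "set b \<subseteq> {1..n-k}"
  proof
    fix z assume "z \<in> set b"
    then obtain y where y: "y \<in> set g" "z = y - k" unfolding b_def by auto
    have "k < y" "y \<le> n" using gk[OF y(1)] inG[OF y(1)] by simp_all
    then show "z \<in> {1..n-k}" using y by (simp add: diff_le_mono)
  qed
  have pb: "is_perm (n-k) b" using perm_of_subset[OF db sb] lg unfolding b_def by simp
  show ?thesis using sp gb pa pb kn unfolding k_def by blast
qed


definition SS :: "nat \<Rightarrow> nat list set" where "SS k = {s. is_perm k s \<and> \<not> c120 s \<and> \<not> c3012 s}"
definition TT :: "nat \<Rightarrow> nat list set" where "TT k = {s. is_perm k s \<and> \<not> c120 s \<and> \<not> c123 s}"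
definition DD :: "nat \<Rightarrow> nat list set" where "DD k = {s. is_perm k s \<and> \<not> c12 s}"

lemma SS_finite: "finite (SS k)" unfolding SS_def by (rule finite_subset[OF _ perm_finite[of k]]) blast
lemma TT_finite: "finite (TT k)" unfolding TT_def by (rule finite_subset[OF _ perm_finite[of k]]) blast
lemma DD_finite: "finite (DD k)" unfolding DD_def by (rule finite_subset[OF _ perm_finite[of k]]) blast

lemma neq_pos:
  assumes "is_perm k a" "is_perm k' a'" "k' \<le> n" "k < k'"
  shows "a @ Suc n # x \<noteq> a' @ Suc n # y"
proof
  assume eq: "a @ Suc n # x = a' @ Suc n # y"
  have la: "length a = k" "length a' = k'" using assms unfolding is_perm_def by simp_all
  have "(a @ Suc n # x) ! length a = Suc n" by simp
  then have "(a @ Suc n # x) ! k = Suc n" using la by simp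
  moreover have "(a' @ Suc n # y) ! k = a' ! k" using la assms(4) by (simp add: nth_append)
  moreover have "a' ! k \<le> k'" using perm_le[OF assms(2)] la assms(4) by simp
  ultimately show False using eq assms(3) by simp
qed

lemma count_decomp:
  assumes X: "\<And>s. s \<in> X \<longleftrightarrow> (\<exists>k\<le>n. \<exists>a b. s = a @ Suc n # map (\<lambda>v. v+k) b \<and> a \<in> A k \<and> b \<in> B k)"
    and A: "\<And>k a. a \<in> A k \<Longrightarrow> is_perm k a" and finA: "\<And>k. finite (A k)" and finB: "\<And>k. finite (B k)"
  shows "card X = (\<Sum>k\<le>n. card (A k) * card (B k))"
proof -
  define F where "F k = (\<lambda>(a,b). a @ Suc n # map (\<lambda>v. v+k) b) ` (A k \<times> B k)" for k
  have XF: "X = \<Union> (F ` {..n})"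
  proof (rule set_eqI)
    fix s
    have "s \<in> \<Union> (F ` {..n}) \<longleftrightarrow> (\<exists>k\<le>n. s \<in> F k)" unfolding UN_iff atMost_iff by blast
    also have "\<dots> \<longleftrightarrow> (\<exists>k\<le>n. \<exists>a b. s = a @ Suc n # map (\<lambda>v. v+k) b \<and> a \<in> A k \<and> b \<in> B k)"
      unfolding F_def by (intro ex_cong1 conj_cong refl) auto
    finally show "s \<in> X \<longleftrightarrow> s \<in> \<Union> (F ` {..n})" using X by simp
  qed
  have disj: "\<forall>i\<in>{..n}. \<forall>j\<in>{..n}. i \<noteq> j \<longrightarrow> F i \<inter> F j = {}"
  proof (intro ballI impI)
    fix i j assume ij: "i \<in> {..n}" "j \<in> {..n}" "i \<noteq> j"
    show "F i \<inter> F j = {}"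
    proof (rule ccontr)
      assume "F i \<inter> F j \<noteq> {}"
      then obtain t where t: "t \<in> F i" "t \<in> F j" by blast
      from t(1) obtain a b where ab1: "a \<in> A i" "b \<in> B i" "t = a @ Suc n # map (\<lambda>v. v+i) b"
        unfolding F_def by auto
      from t(2) obtain a' b' where ab2: "a' \<in> A j" "b' \<in> B j" "t = a' @ Suc n # map (\<lambda>v. v+j) b'"
        unfolding F_def by auto
      have ab: "a \<in> A i" "b \<in> B i" "a' \<in> A j" "b' \<in> B j"
        "a @ Suc n # map (\<lambda>v. v+i) b = a' @ Suc n # map (\<lambda>v. v+j) b'" using ab1 ab2 by simp_all
      have pa: "is_perm i a" "is_perm j a'" using A ab by simp_all
      consider "i < j" | "j < i" using ij by linarith
      then show False
      proof cases
        case 1 then show False using neq_pos[OF pa(1) pa(2) _ 1] ij ab(5) by simp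
      next
        case 2 then show False using neq_pos[OF pa(2) pa(1) _ 2] ij ab(5)[symmetric] by simp
      qed
    qed
  qed
  have cardF: "card (F k) = card (A k) * card (B k)" for k
  proof -
    have "inj_on (\<lambda>(a,b). a @ Suc n # map (\<lambda>v. v+k) b) (A k \<times> B k)"
    proof (rule inj_onI)
      fix p q assume pq: "p \<in> A k \<times> B k" "q \<in> A k \<times> B k"
        "(\<lambda>(a,b). a @ Suc n # map (\<lambda>v. v+k) b) p = (\<lambda>(a,b). a @ Suc n # map (\<lambda>v. v+k) b) q"
      obtain a b where p: "p = (a,b)" by (cases p)
      obtain a' b' where q: "q = (a',b')" by (cases q)
      have la: "length a = length a'" using pq A p q unfolding is_perm_def by auto
      have eq: "a @ Suc n # map (\<lambda>v. v+k) b = a' @ Suc n # map (\<lambda>v. v+k) b'" using pq p q by simp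
      then have "a = a'" "map (\<lambda>v. v+k) b = map (\<lambda>v. v+k) b'" using la by simp_all
      moreover have "inj (\<lambda>v::nat. v+k)" by (simp add: inj_on_def)
      ultimately have "a = a'" "b = b'" by (simp_all add: inj_map_eq_map)
      then show "p = q" using p q by simp
    qed
    then have "card (F k) = card (A k \<times> B k)" unfolding F_def by (rule card_image)
    then show ?thesis by (simp add: card_cartesian_product)
  qed
  have finF: "\<forall>i\<in>{..n}. finite (F i)" unfolding F_def using finA finB by simp
  have "card X = (\<Sum>k\<in>{..n}. card (F k))"
    unfolding XF by (rule card_UN_disjoint[OF _ finF disj]) simp
  then show ?thesis using cardF by simp
qed

lemma build_perm':
  assumes "k \<le> n" "is_perm k a" "is_perm (n-k) b"
  shows "is_perm (Suc n) (a @ Suc n # map (\<lambda>v. v+k) b)" "split3 a (map (\<lambda>v. v+k) b) (Suc n)"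
  using build_perm[OF assms(2,3)] assms(1) by simp_all

lemma SS_mem: "s \<in> SS (Suc n) \<longleftrightarrow> (\<exists>k\<le>n. \<exists>a b. s = a @ Suc n # map (\<lambda>v. v+k) b \<and> a \<in> SS k \<and> b \<in> TT (n-k))"
proof
  assume s: "s \<in> SS (Suc n)"
  then have p: "is_perm (Suc n) s" "\<not> c120 s" "\<not> c3012 s" unfolding SS_def by auto
  obtain a b where ab: "s = a @ Suc n # map (\<lambda>v. v + length a) b" "is_perm (length a) a" "is_perm (n - length a) b" "length a \<le> n"
    using split_perm[OF p(1,2)] by blast
  define k where "k = length a"
  have sp: "split3 a (map (\<lambda>v. v+k) b) (Suc n)" using build_perm'(2)[of k n a b] ab unfolding k_def by simp
  have "\<not> c120 a" "\<not> c120 b" using p(2) split3.c120_iff[OF sp] ab(1) c120_shift unfolding k_def by simp_all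
  moreover have "\<not> c3012 a" "\<not> c123 b" using p(3) split3.c3012_iff[OF sp] ab(1) c123_shift unfolding k_def by simp_all
  ultimately have "a \<in> SS k" "b \<in> TT (n-k)" using ab unfolding SS_def TT_def k_def by simp_all
  then show "\<exists>k\<le>n. \<exists>a b. s = a @ Suc n # map (\<lambda>v. v+k) b \<and> a \<in> SS k \<and> b \<in> TT (n-k)"
    using ab unfolding k_def by blast
next
  assume "\<exists>k\<le>n. \<exists>a b. s = a @ Suc n # map (\<lambda>v. v+k) b \<and> a \<in> SS k \<and> b \<in> TT (n-k)"
  then obtain k a b where h: "k \<le> n" "s = a @ Suc n # map (\<lambda>v. v+k) b" "a \<in> SS k" "b \<in> TT (n-k)" by blast
  have pa: "is_perm k a" "\<not> c120 a" "\<not> c3012 a" using h(3) unfolding SS_def by auto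
  have pb: "is_perm (n-k) b" "\<not> c120 b" "\<not> c123 b" using h(4) unfolding TT_def by auto
  have sp: "split3 a (map (\<lambda>v. v+k) b) (Suc n)" using build_perm'(2)[OF h(1) pa(1) pb(1)] .
  have "is_perm (Suc n) s" using build_perm'(1)[OF h(1) pa(1) pb(1)] h(2) by simp
  moreover have "\<not> c120 s" using split3.c120_iff[OF sp] h(2) c120_shift pa pb by simp
  moreover have "\<not> c3012 s" using split3.c3012_iff[OF sp] h(2) c123_shift c120_shift c3012_c123 pa pb
    by (metis c123_shift)
  ultimately show "s \<in> SS (Suc n)" unfolding SS_def by simp
qed

lemma TT_mem: "s \<in> TT (Suc n) \<longleftrightarrow> (\<exists>k\<le>n. \<exists>a b. s = a @ Suc n # map (\<lambda>v. v+k) b \<and> a \<in> DD k \<and> b \<in> (if k = 0 then TT n else DD (n-k)))"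
proof
  assume s: "s \<in> TT (Suc n)"
  then have p: "is_perm (Suc n) s" "\<not> c120 s" "\<not> c123 s" unfolding TT_def by auto
  obtain a b where ab: "s = a @ Suc n # map (\<lambda>v. v + length a) b" "is_perm (length a) a" "is_perm (n - length a) b" "length a \<le> n"
    using split_perm[OF p(1,2)] by blast
  define k where "k = length a"
  have sp: "split3 a (map (\<lambda>v. v+k) b) (Suc n)" using build_perm'(2)[of k n a b] ab unfolding k_def by simp
  have "\<not> c120 b" using p(2) split3.c120_iff[OF sp] ab(1) c120_shift unfolding k_def by simp
  moreover have c: "\<not> c12 a" "\<not> c123 b" "a \<noteq> [] \<Longrightarrow> \<not> c12 b"
    using p(3) split3.c123_iff[OF sp] ab(1) c123_shift c12_shift unfolding k_def by simp_all
  ultimately have "a \<in> DD k" "b \<in> (if k = 0 then TT n else DD (n-k))"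
    using ab unfolding DD_def TT_def k_def by auto
  then show "\<exists>k\<le>n. \<exists>a b. s = a @ Suc n # map (\<lambda>v. v+k) b \<and> a \<in> DD k \<and> b \<in> (if k = 0 then TT n else DD (n-k))"
    using ab unfolding k_def by blast
next
  assume "\<exists>k\<le>n. \<exists>a b. s = a @ Suc n # map (\<lambda>v. v+k) b \<and> a \<in> DD k \<and> b \<in> (if k = 0 then TT n else DD (n-k))"
  then obtain k a b where h: "k \<le> n" "s = a @ Suc n # map (\<lambda>v. v+k) b" "a \<in> DD k" "b \<in> (if k = 0 then TT n else DD (n-k))" by blast
  have pa: "is_perm k a" "\<not> c12 a" using h(3) unfolding DD_def by auto
  have pb: "is_perm (n-k) b" using h(4) unfolding DD_def TT_def by (auto split: if_splits)
  have sp: "split3 a (map (\<lambda>v. v+k) b) (Suc n)" using build_perm'(2)[OF h(1) pa(1) pb] .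
  have bc12: "\<not> c120 b \<and> \<not> c123 b"
  proof (cases "k = 0")
    case True then show ?thesis using h(4) unfolding TT_def by auto
  next
    case False then show ?thesis using h(4) c120_c12 c123_c12 unfolding DD_def by auto
  qed
  have bc3: "a \<noteq> [] \<longrightarrow> \<not> c12 b"
  proof
    assume "a \<noteq> []"
    then have "k \<noteq> 0" using pa(1) unfolding is_perm_def by auto
    then show "\<not> c12 b" using h(4) unfolding DD_def by auto
  qed
  note bc = bc12[THEN conjunct1] bc12[THEN conjunct2] bc3
  have "is_perm (Suc n) s" using build_perm'(1)[OF h(1) pa(1) pb] h(2) by simp
  moreover have "\<not> c120 s" using split3.c120_iff[OF sp] h(2) c120_shift pa(2) c120_c12 bc by blast
  moreover have "c123 s \<longleftrightarrow> c12 a \<or> c123 b \<or> (a \<noteq> [] \<and> c12 b)"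
    using split3.c123_iff[OF sp] h(2) c123_shift c12_shift by simp
  then have "\<not> c123 s" using pa(2) bc by blast
  ultimately show "s \<in> TT (Suc n)" unfolding TT_def by simp
qed

lemma card_SS_Suc: "card (SS (Suc n)) = (\<Sum>k\<le>n. card (SS k) * card (TT (n-k)))"
proof (rule count_decomp[OF SS_mem])
  fix k a assume "a \<in> SS k" then show "is_perm k a" unfolding SS_def by simp
qed (simp_all add: SS_finite TT_finite)

lemma card_TT_Suc_sum: "card (TT (Suc n)) = (\<Sum>k\<le>n. card (DD k) * card (if k = 0 then TT n else DD (n-k)))"
proof -
  have "card (TT (Suc n)) = (\<Sum>k\<le>n. card (DD k) * card ((\<lambda>k. if k = 0 then TT n else DD (n-k)) k))"
  proof (rule count_decomp[where B="\<lambda>k. if k = 0 then TT n else DD (n-k)", OF TT_mem])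
    fix k a assume "a \<in> DD k" then show "is_perm k a" unfolding DD_def by simp
  qed (simp_all add: DD_finite TT_finite)
  then show ?thesis by simp
qed

lemma set_upt1: "set [1..<Suc k] = {1..k}"
  by (simp only: set_upt atLeastLessThanSuc_atLeastAtMost)

lemma rev_upt_perm: "is_perm k (rev [1..<Suc k])"
proof -
  have "set (rev [1..<Suc k]) = {1..k}" by (simp only: set_rev set_upt1)
  then show ?thesis unfolding is_perm_def by simp
qed

lemma DD_eq: "DD k = {rev [1..<Suc k]}"
proof (rule set_eqI)
  fix s
  show "s \<in> DD k \<longleftrightarrow> s \<in> {rev [1..<Suc k]}"
  proof
    assume "s \<in> DD k"
    then have p: "is_perm k s" "\<not> c12 s" unfolding DD_def by auto
    have "sorted (rev s)" unfolding sorted_rev_iff_nth_mono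
    proof (intro allI impI)
      fix i j assume ij: "i \<le> j" "j < length s"
      show "s!j \<le> s!i"
      proof (rule ccontr)
        assume a: "\<not> s!j \<le> s!i"
        then have "i \<noteq> j" by auto
        then have "i < j" using ij by simp
        moreover have "s!i < s!j" using a by simp
        ultimately have "c12 s" unfolding c12_def using ij by blast
        then show False using p by simp
      qed
    qed
    moreover have "distinct (rev s)" using p(1) unfolding is_perm_def by simp
    moreover have "set (rev s) = set [1..<Suc k]" using p(1) unfolding is_perm_def set_upt1 by simp
    moreover have "sorted [1..<Suc k]" by (rule sorted_upt)
    moreover have "distinct [1..<Suc k]" by (rule distinct_upt)
    ultimately have "rev s = [1..<Suc k]" by (intro sorted_distinct_set_unique)
    then have "s = rev [1..<Suc k]" by (metis rev_rev_ident)
    then show "s \<in> {rev [1..<Suc k]}" by simp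
  next
    assume "s \<in> {rev [1..<Suc k]}"
    then have s: "s = rev [1..<Suc k]" by simp
    have "\<not> c12 s"
    proof
      assume "c12 s"
      then obtain i j where h: "i<j" "j<length s" "s!i < s!j" unfolding c12_def by blast
      have "sorted (rev s)" unfolding s rev_rev_ident by (rule sorted_upt)
      then have "s!j \<le> s!i" using h unfolding sorted_rev_iff_nth_mono by simp
      then show False using h by simp
    qed
    then show "s \<in> DD k" unfolding DD_def using rev_upt_perm s by simp
  qed
qed

lemma card_DD: "card (DD k) = 1"
  unfolding DD_eq by simp

lemma card_TT_Suc: "card (TT (Suc n)) = card (TT n) + n"
proof (cases n)
  case 0
  then show ?thesis unfolding card_TT_Suc_sum by (simp add: card_DD)
next
  case (Suc m)
  have "card (TT (Suc n)) = (\<Sum>k\<le>Suc m. card (DD k) * card (if k = 0 then TT n else DD (n-k)))"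
    unfolding card_TT_Suc_sum Suc by simp
  also have "\<dots> = card (TT n) + (\<Sum>k\<le>m. 1)"
    by (subst sum.atMost_Suc_shift) (simp add: card_DD)
  finally show ?thesis using Suc by simp
qed

lemma perm0: "is_perm 0 s \<longleftrightarrow> s = []"
  unfolding is_perm_def by auto

lemma card_SS0: "card (SS 0) = 1"
proof -
  have "SS 0 = {[]}" unfolding SS_def perm0 c120_def c3012_def by auto
  then show ?thesis by simp
qed

lemma card_TT0: "card (TT 0) = 1"
proof -
  have "TT 0 = {[]}" unfolding TT_def perm0 c120_def c123_def by auto
  then show ?thesis by simp
qed

lemma S_eq_SS: "S_231_4123 n = SS n"
  unfolding S_231_4123_def SS_def perm_contains_def
  using contains_120 contains_3012 unfolding contains_def by simp


unbundle fps_syntax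

lemma fps_num_mult_nth: "(numeral k * f) $ n = numeral k * (f $ n :: 'a::comm_ring_1)"
  by (simp add: fps_numeral_fps_const)

lemma coeffD: "((g::rat fps) * (1 - 4 * fps_X + 5 * fps_X ^ 2 - 3 * fps_X ^ 3)) $ n =
   g$n - 4 * (if n < 1 then 0 else g$(n-1)) + 5 * (if n < 2 then 0 else g$(n-2)) - 3 * (if n < 3 then 0 else g$(n-3))"
proof -
  have "g * (1 - 4 * fps_X + 5 * fps_X ^ 2 - 3 * fps_X ^ 3) = g - 4 * (fps_X^1 * g) + 5 * (fps_X^2 * g) - 3 * (fps_X^3 * g)"
    by (simp add: algebra_simps)
  then show ?thesis by (simp add: fps_num_mult_nth fps_X_power_mult_nth del: power_one_right)
qed

lemma coeffE: "((g::rat fps) * (1 - 3 * fps_X + 3 * fps_X ^ 2 - fps_X ^ 3)) $ n =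
   g$n - 3 * (if n < 1 then 0 else g$(n-1)) + 3 * (if n < 2 then 0 else g$(n-2)) - (if n < 3 then 0 else g$(n-3))"
proof -
  have "g * (1 - 3 * fps_X + 3 * fps_X ^ 2 - fps_X ^ 3) = g - 3 * (fps_X^1 * g) + 3 * (fps_X^2 * g) - (fps_X^3 * g)"
    by (simp add: algebra_simps)
  then show ?thesis by (simp add: fps_num_mult_nth fps_X_power_mult_nth del: power_one_right)
qed

lemma cube_expand: "(1 - x)^3 = 1 - 3 * x + 3 * x^2 - (x::'a::comm_ring_1)^3"
  by (simp add: power3_eq_cube power2_eq_square algebra_simps)

lemma D_expand: "(1 - 3 * x + 3 * x^2 - x^3) - x * (1 - 2 * x + 2 * x^2) = 1 - 4 * x + 5 * x^2 - 3 * (x::'a::comm_ring_1)^3"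
  by (simp add: power3_eq_cube power2_eq_square algebra_simps)

lemma E_nth: "((1 - 3 * fps_X + 3 * fps_X ^ 2 - fps_X ^ 3) :: rat fps) $ n = (if n = 0 then 1 else if n = 1 then -3 else if n = 2 then 3 else if n = 3 then -1 else 0)"
proof -
  have "((1 - 3 * fps_X + 3 * fps_X ^ 2 - fps_X ^ 3) :: rat fps) = 1 - 3 * (fps_X^1 * 1) + 3 * (fps_X^2 * 1) - fps_X^3 * 1" by simp
  then show ?thesis by (simp add: fps_num_mult_nth fps_X_power_mult_nth fps_numeral_nth del: power_one_right)
qed

lemma Q_nth: "((1 - 2 * fps_X + 2 * fps_X ^ 2) :: rat fps) $ n = (if n = 0 then 1 else if n = 1 then -2 else if n = 2 then 2 else 0)"
proof -
  have "((1 - 2 * fps_X + 2 * fps_X ^ 2) :: rat fps) = 1 - 2 * (fps_X^1 * 1) + 2 * (fps_X^2 * 1)" by simp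
  then show ?thesis by (simp add: fps_num_mult_nth fps_X_power_mult_nth fps_numeral_nth del: power_one_right)
qed


definition an :: "nat \<Rightarrow> nat" where "an n = card (G n 0) + card (G n 1) + card (G n 2)"

lemma an_rec:
  assumes "1 \<le> n"
  shows "an (n+3) + 5 * an (n+1) = 4 * an (n+2) + 3 * an n"
proof -
  have n1: "1 \<le> Suc n" "1 \<le> Suc (Suc n)" using assms by simp_all
  note c0 = cnt0[OF assms] cnt0[OF n1(1)] cnt0[OF n1(2)]
  note c1 = cnt1[OF assms] cnt1[OF n1(1)] cnt1[OF n1(2)]
  note c2 = cnt2[OF assms] cnt2[OF n1(1)] cnt2[OF n1(2)]
  have e: "n+3 = Suc (Suc (Suc n))" "n+2 = Suc (Suc n)" "n+1 = Suc n" by simp_all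
  show ?thesis unfolding an_def e by (simp only: c0 c1 c2) (simp add: algebra_simps)
qed

lemma an_small: "an 1 = 1" "an 2 = 2" "an 3 = 5"
proof -
  have "G 1 0 = {[0]}" "G 1 1 = {}" "G 1 2 = {}" using G1[of 0] G1[of 1] G1[of 2] by simp_all
  then have g: "card (G 1 0) = 1" "card (G 1 1) = 0" "card (G 1 2) = 0" by simp_all
  have one: "(1::nat) \<le> 1" by simp
  have two: "(1::nat) \<le> 2" by simp
  have h2: "card (G 2 0) = 1" "card (G 2 1) = 1" "card (G 2 2) = 0"
    using cnt0[OF one] cnt1[OF one] cnt2[OF one] g by (simp_all add: numeral_2_eq_2)
  have h3: "card (G 3 0) = 1" "card (G 3 1) = 3" "card (G 3 2) = 1"
    using cnt0[OF two] cnt1[OF two] cnt2[OF two] h2 by (simp_all add: numeral_3_eq_3 numeral_2_eq_2)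
  show "an 1 = 1" "an 2 = 2" "an 3 = 5" unfolding an_def using g h2 h3 by simp_all
qed

definition Dp :: "rat fps" where "Dp = 1 - 4 * fps_X + 5 * fps_X ^ 2 - 3 * fps_X ^ 3"
definition Ep :: "rat fps" where "Ep = 1 - 3 * fps_X + 3 * fps_X ^ 2 - fps_X ^ 3"
definition Qp :: "rat fps" where "Qp = 1 - 2 * fps_X + 2 * fps_X ^ 2"

definition Aser :: "rat fps" where "Aser = Abs_fps (\<lambda>n. if n = 0 then 1 else of_nat (an n))"

lemma A_D: "Aser * Dp = Ep"
proof (rule fps_ext)
  fix n
  show "(Aser * Dp) $ n = Ep $ n"
  proof (cases "n \<ge> 4")
    case True
    define m where "m = n - 4"
    have m: "n = Suc (Suc (Suc (Suc m)))" using True unfolding m_def by simp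
    have r: "an (Suc (Suc (Suc (Suc m)))) + 5 * an (Suc (Suc m)) = 4 * an (Suc (Suc (Suc m))) + 3 * an (Suc m)"
      using an_rec[of "Suc m"] by (simp add: eval_nat_numeral)
    have r': "(of_nat (an (Suc (Suc (Suc (Suc m))))) :: rat) + 5 * of_nat (an (Suc (Suc m))) = 4 * of_nat (an (Suc (Suc (Suc m)))) + 3 * of_nat (an (Suc m))"
      using arg_cong[OF r, of "of_nat :: nat \<Rightarrow> rat"] by simp
    have l: "(Aser * Dp) $ n = of_nat (an (Suc (Suc (Suc (Suc m))))) - 4 * of_nat (an (Suc (Suc (Suc m)))) + 5 * of_nat (an (Suc (Suc m))) - 3 * of_nat (an (Suc m))"
      unfolding Dp_def coeffD Aser_def m by simp
    have "Ep $ n = 0" unfolding Ep_def E_nth m by simp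
    then show ?thesis using l r' by linarith
  next
    case False
    then consider "n = 0" | "n = 1" | "n = 2" | "n = 3" by linarith
    then show ?thesis unfolding Dp_def Ep_def coeffD E_nth Aser_def using an_small by cases simp_all
  qed
qed

definition Fser :: "rat fps" where "Fser = Abs_fps (\<lambda>n. of_nat (card (SS n)))"
definition Tser :: "rat fps" where "Tser = Abs_fps (\<lambda>n. of_nat (card (TT n)))"

lemma F_eq: "Fser = 1 + fps_X * (Fser * Tser)"
proof (rule fps_ext)
  fix n
  show "Fser $ n = (1 + fps_X * (Fser * Tser)) $ n"
  proof (cases n)
    case 0 then show ?thesis unfolding Fser_def by (simp add: card_SS0)
  next
    case (Suc m)
    have "(Fser * Tser) $ m = (\<Sum>i=0..m. of_nat (card (SS i)) * of_nat (card (TT (m - i))))"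
      unfolding Fser_def Tser_def fps_mult_nth by simp
    also have "\<dots> = of_nat (\<Sum>k\<le>m. card (SS k) * card (TT (m-k)))"
      by (simp add: atLeast0AtMost)
    also have "\<dots> = of_nat (card (SS (Suc m)))" using card_SS_Suc by simp
    finally show ?thesis unfolding Suc by (simp add: Fser_def)
  qed
qed

lemma TT_small: "card (TT 1) = 1" "card (TT 2) = 2" "card (TT 3) = 4"
  using card_TT_Suc[of 0] card_TT_Suc[of 1] card_TT_Suc[of 2] card_TT0
  by (simp_all add: numeral_2_eq_2 numeral_3_eq_3)

lemma T_E: "Tser * Ep = Qp"
proof (rule fps_ext)
  fix n
  show "(Tser * Ep) $ n = Qp $ n"
  proof (cases "n \<ge> 4")
    case True
    define m where "m = n - 4"
    have m: "n = Suc (Suc (Suc (Suc m)))" using True unfolding m_def by simp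
    have t: "card (TT (Suc (Suc m))) = card (TT (Suc m)) + Suc m" "card (TT (Suc (Suc (Suc m)))) = card (TT (Suc (Suc m))) + Suc (Suc m)"
      "card (TT (Suc (Suc (Suc (Suc m))))) = card (TT (Suc (Suc (Suc m)))) + Suc (Suc (Suc m))"
      using card_TT_Suc[of "Suc m"] card_TT_Suc[of "Suc (Suc m)"] card_TT_Suc[of "Suc (Suc (Suc m))"] by simp_all
    have l: "(Tser * Ep) $ n = of_nat (card (TT (Suc (Suc (Suc (Suc m)))))) - 3 * of_nat (card (TT (Suc (Suc (Suc m))))) + 3 * of_nat (card (TT (Suc (Suc m)))) - of_nat (card (TT (Suc m)))"
      unfolding Ep_def coeffE Tser_def m by simp
    have "Qp $ n = 0" unfolding Qp_def Q_nth m by simp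
    then show ?thesis using l t by simp
  next
    case False
    then consider "n = 0" | "n = 1" | "n = 2" | "n = 3" by linarith
    then show ?thesis unfolding Qp_def Ep_def coeffE Q_nth Tser_def using TT_small card_TT0 by cases simp_all
  qed
qed

lemma F_D: "Fser * Dp = Ep"
proof -
  have D: "Dp = Ep - fps_X * Qp" unfolding Dp_def Ep_def Qp_def by (rule D_expand[symmetric])
  have "Fser * Ep = (1 + fps_X * (Fser * Tser)) * Ep" using F_eq by simp
  also have "\<dots> = Ep + fps_X * Fser * (Tser * Ep)" by (simp add: algebra_simps)
  also have "\<dots> = Ep + fps_X * Fser * Qp" using T_E by simp
  finally have "Fser * Ep = Ep + fps_X * Fser * Qp" .
  then show ?thesis unfolding D by (simp add: algebra_simps)
qed

lemma Dp_nz: "Dp \<noteq> 0"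
proof -
  have "(1 * Dp) $ 0 = 1" unfolding Dp_def coeffD by simp
  then show ?thesis by auto
qed

lemma A_F: "Aser = Fser"
  using A_D F_D Dp_nz by (metis mult_right_cancel)

lemma an_SS: "1 \<le> n \<Longrightarrow> an n = card (SS n)"
proof -
  assume n: "1 \<le> n"
  have "Aser $ n = Fser $ n" using A_F by simp
  then have "(of_nat (an n) :: rat) = of_nat (card (SS n))" unfolding Aser_def Fser_def using n by simp
  then show ?thesis by simp
qed

lemma aP_B: "1 \<le> n \<Longrightarrow> a_P {[1,0,1],[1,2,0]} n = an n"
  unfolding a_P_def setB an_def card_setG by simp
lemma aP_A: "1 \<le> n \<Longrightarrow> a_P {[0,1,0,1],[0,1,2,0]} n = an n"
  unfolding a_P_def setA an_def card_setG by simp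

theorem theorem3p4:
  shows "(\<forall>n\<ge>1. a_P {[0,1,0,1],[0,1,2,0]} n = a_P {[1,0,1],[1,2,0]} n
                \<and> a_P {[1,0,1],[1,2,0]} n = card (S_231_4123 n))
     \<and> Abs_fps (\<lambda>n. if n = 0 then 1 else (of_nat (a_P {[0,1,0,1],[0,1,2,0]} n) :: rat))
         = (1 - fps_X) ^ 3 / (1 - 4 * fps_X + 5 * fps_X ^ 2 - 3 * fps_X ^ 3)"
proof
  show "\<forall>n\<ge>1. a_P {[0,1,0,1],[0,1,2,0]} n = a_P {[1,0,1],[1,2,0]} n
                \<and> a_P {[1,0,1],[1,2,0]} n = card (S_231_4123 n)"
    using aP_A aP_B an_SS S_eq_SS by simp
  have "Abs_fps (\<lambda>n. if n = 0 then 1 else (of_nat (a_P {[0,1,0,1],[0,1,2,0]} n) :: rat)) = Aser"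
    unfolding Aser_def
  proof (rule fps_ext)
    fix n
    show "Abs_fps (\<lambda>n. if n = 0 then 1 else (of_nat (a_P {[0,1,0,1],[0,1,2,0]} n) :: rat)) $ n = Abs_fps (\<lambda>n. if n = 0 then 1 else of_nat (an n)) $ n"
      using aP_A[of n] by (cases "n = 0") simp_all
  qed
  also have "\<dots> = (Aser * Dp) / Dp" using Dp_nz by simp
  also have "\<dots> = (1 - fps_X) ^ 3 / (1 - 4 * fps_X + 5 * fps_X ^ 2 - 3 * fps_X ^ 3)"
    unfolding A_D unfolding Ep_def Dp_def cube_expand by simp
  finally show "Abs_fps (\<lambda>n. if n = 0 then 1 else (of_nat (a_P {[0,1,0,1],[0,1,2,0]} n) :: rat))
         = (1 - fps_X) ^ 3 / (1 - 4 * fps_X + 5 * fps_X ^ 2 - 3 * fps_X ^ 3)" .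
qed


end
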